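(* Fix $\mu\in\mathbb{R}$ and $p\in[1,\infty]$, let $k(t)=e^{\mu t}$ and for real $n>0$ let $V_k^n$ denote the operator on $L^p(0,1)$ of convolution with $k^{*n}(t)=\frac{1}{\Gamma(n)}t^{n-1}e^{\mu t}$, i.e. $(V_k^nu)(t)=\int_0^t k^{*n}(t-s)u(s)\,ds$ (for integer $n$ this is the $n$-th power of $V_k$). Then $$V_k^n\sim\frac{e^{-(n-1)}}{\Gamma(n)}S_{n-1+\mu}\quad\text{and}\quad \|V_k^n\|_p\sim\frac{C_p e^\mu}{\Gamma(n+1)}$$ as $n\to\infty$ through $\mathbb{R}^+$, where $(S_\lambda f)(t)=\int_0^1 e^{\lambda(t-s)}f(s)\,ds$.
   Context: $C_p=1/(p^{1/p}q^{1/q})$ if $1<p<\infty$ where $1/p+1/q=1$, and $C_p=1$ if $p=1$ or $p=\infty$. $\|\cdot\|_p$ denotes the operator norm on $L^p(0,1)$. For operator sequences, $A_n\sim B_n$ means $\|A_n-B_n\|/\|A_n\|\to0$; for numbers, $a_n\sim b_n$ means $a_n/b_n\to1$. *)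

theory Defs
  imports "HOL-Analysis.Analysis" "HOL-Probability.Essential_Supremum"
begin

text \<open>Exponent p in [1,infinity] is an extended real. Functions on (0,1) are real-valued
  functions on the reals; only their values on [0,1] matter.\<close>

definition inLp :: "ereal \<Rightarrow> (real \<Rightarrow> real) \<Rightarrow> bool" where
  "inLp p f \<longleftrightarrow> f \<in> borel_measurable (lebesgue_on {0..1}) \<and>
     (if p = \<infinity> then esssup (lebesgue_on {0..1}) (\<lambda>x. ereal \<bar>f x\<bar>) < \<infinity>
      else integrable (lebesgue_on {0..1}) (\<lambda>x. \<bar>f x\<bar> powr real_of_ereal p))"

definition lpnorm :: "ereal \<Rightarrow> (real \<Rightarrow> real) \<Rightarrow> real" where
  "lpnorm p f = (if p = \<infinity> then real_of_ereal (esssup (lebesgue_on {0..1}) (\<lambda>x. ereal \<bar>f x\<bar>))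
      else (integral\<^sup>L (lebesgue_on {0..1}) (\<lambda>x. \<bar>f x\<bar> powr real_of_ereal p))
             powr (1 / real_of_ereal p))"

definition opnorm :: "ereal \<Rightarrow> ((real \<Rightarrow> real) \<Rightarrow> (real \<Rightarrow> real)) \<Rightarrow> real" where
  "opnorm p T = Sup {lpnorm p (T u) | u. inLp p u \<and> lpnorm p u \<le> 1}"

definition Cp :: "ereal \<Rightarrow> real" where
  "Cp p = (if p = 1 \<or> p = \<infinity> then 1 else
     (let r = real_of_ereal p; q = r / (r - 1) in 1 / (r powr (1/r) * q powr (1/q))))"

definition Vk :: "real \<Rightarrow> real \<Rightarrow> (real \<Rightarrow> real) \<Rightarrow> (real \<Rightarrow> real)" where
  "Vk \<mu> n u = (\<lambda>t. LINT s:{0..t}|lebesgue. ((t - s) powr (n - 1) * exp (\<mu> * (t - s)) / Gamma n) * u s)"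

definition Sop :: "real \<Rightarrow> (real \<Rightarrow> real) \<Rightarrow> (real \<Rightarrow> real)" where
  "Sop la f = (\<lambda>t. LINT s:{0..1}|lebesgue. exp (la * (t - s)) * f s)"

end

theory Submission
  imports Defs "HOL-Real_Asymp.Real_Asymp"
begin

lemma lint_FTC:
  fixes f F :: "real \<Rightarrow> real"
  assumes "a \<le> b" "continuous_on {a..b} f"
    "\<And>x. a \<le> x \<Longrightarrow> x \<le> b \<Longrightarrow> (F has_real_derivative f x) (at x within {a..b})"
  shows "integral\<^sup>L (lebesgue_on {a..b}) f = F b - F a"
proof -
  have i: "integrable (lebesgue_on {a..b}) f" using assms(2) by (rule continuous_imp_integrable_real)
  have "(f has_integral F b - F a) {a..b}"
    using assms by (intro fundamental_theorem_of_calculus) (auto simp: has_real_derivative_iff_has_vector_derivative[symmetric])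
  then show ?thesis using lebesgue_integral_eq_integral[OF i] by (simp add: integral_unique)
qed

lemma lint_exp:
  fixes a b c :: real
  assumes "a \<le> b" "c \<noteq> 0"
  shows "integral\<^sup>L (lebesgue_on {a..b}) (\<lambda>t. exp (c*t)) = (exp(c*b) - exp(c*a))/c"
proof -
  have "integral\<^sup>L (lebesgue_on {a..b}) (\<lambda>t. exp (c*t)) = exp(c*b)/c - exp(c*a)/c"
    using assms(1) by (intro lint_FTC[where F="\<lambda>x. exp(c*x)/c"]) (auto intro!: continuous_intros derivative_eq_intros simp: assms(2))
  then show ?thesis by (simp add: diff_divide_distrib[symmetric])
qed

lemma lint_exp01:
  fixes c :: real
  assumes "c \<noteq> 0"
  shows "integral\<^sup>L (lebesgue_on {0..1}) (\<lambda>t. exp (c*t)) = (exp c - 1)/c"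
  using lint_exp[of 0 1 c] assms by simp

lemma emeasure_01_ne0: "emeasure (lebesgue_on {0..1::real}) (space (lebesgue_on {0..1::real})) \<noteq> 0"
  by (simp add: emeasure_restrict_space)

lemma esssup_nonneg:
  fixes f :: "real \<Rightarrow> real"
  shows "0 \<le> esssup (lebesgue_on {0..1}) (\<lambda>x. ereal \<bar>f x\<bar>)"
proof -
  have "esssup (lebesgue_on {0..1::real}) (\<lambda>x. 0::ereal) = 0"
    by (rule esssup_const[OF emeasure_01_ne0])
  moreover have "esssup (lebesgue_on {0..1::real}) (\<lambda>x. 0::ereal) \<le> esssup (lebesgue_on {0..1}) (\<lambda>x. ereal \<bar>f x\<bar>)"
    by (rule esssup_mono) auto
  ultimately show ?thesis by simp
qed

lemma lpnorm_nonneg: "0 \<le> lpnorm p f"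
  unfolding lpnorm_def using esssup_nonneg[of f]
  by (auto simp: real_of_ereal_pos)

lemma inLp_zero: "inLp p (\<lambda>x. 0)"
  unfolding inLp_def by (auto simp: esssup_const[OF emeasure_01_ne0])

lemma lpnorm_zero: "lpnorm p (\<lambda>x. 0) = 0"
  unfolding lpnorm_def by (auto simp: esssup_const[OF emeasure_01_ne0])

lemma opnorm_le:
  assumes "\<And>u. inLp p u \<Longrightarrow> lpnorm p u \<le> 1 \<Longrightarrow> lpnorm p (T u) \<le> B"
  shows "opnorm p T \<le> B"
  unfolding opnorm_def
proof (rule cSup_least)
  show "{lpnorm p (T u) |u. inLp p u \<and> lpnorm p u \<le> 1} \<noteq> {}"
    using inLp_zero[of p] lpnorm_zero[of p] by force
qed (use assms in blast)

lemma opnorm_ge: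
  assumes "\<And>u. inLp p u \<Longrightarrow> lpnorm p u \<le> 1 \<Longrightarrow> lpnorm p (T u) \<le> B"
    "inLp p u" "lpnorm p u \<le> 1"
  shows "lpnorm p (T u) \<le> opnorm p T"
  unfolding opnorm_def
proof (rule cSup_upper)
  show "bdd_above {lpnorm p (T u) |u. inLp p u \<and> lpnorm p u \<le> 1}"
    by (rule bdd_aboveI[where M=B]) (use assms(1) in auto)
  show "lpnorm p (T u) \<in> {lpnorm p (T u) |u. inLp p u \<and> lpnorm p u \<le> 1}"
    using assms(2,3) by auto
qed

lemma opnorm_nonneg:
  assumes "\<And>u. inLp p u \<Longrightarrow> lpnorm p u \<le> 1 \<Longrightarrow> lpnorm p (T u) \<le> B"
  shows "0 \<le> opnorm p T"
proof -
  have z: "lpnorm p (\<lambda>x. 0) \<le> 1" using lpnorm_zero[of p] by simp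
  have "lpnorm p (T (\<lambda>x. 0)) \<le> opnorm p T"
    by (rule opnorm_ge[OF assms inLp_zero z])
  then show ?thesis using lpnorm_nonneg[of p "T (\<lambda>x. 0)"] by linarith
qed


lemma p_cases:
  assumes "1 \<le> p"
  obtains "p = \<infinity>" | r where "p = ereal r" "1 \<le> r"
  using assms by (cases p) auto

definition Aexp :: "ereal \<Rightarrow> real \<Rightarrow> real" where
  "Aexp p \<nu> = (if p = \<infinity> then exp \<nu> else
     exp \<nu> * ((1 - exp (-(real_of_ereal p) * \<nu>)) / (real_of_ereal p * \<nu>)) powr (1 / real_of_ereal p))"

definition Bexp :: "ereal \<Rightarrow> real \<Rightarrow> real" where
  "Bexp p \<nu> = (if p = \<infinity> then (1 - exp (-\<nu>)) / \<nu> else if p = 1 then 1 else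
     (let q = real_of_ereal p / (real_of_ereal p - 1) in ((1 - exp (-q*\<nu>)) / (q*\<nu>)) powr (1/q)))"

lemma lp_upper_exp:
  fixes f :: "real \<Rightarrow> real"
  assumes p: "1 \<le> p" and nu: "\<nu> > 0" and C: "C \<ge> 0"
    and bd: "\<And>t. t \<in> {0..1} \<Longrightarrow> \<bar>f t\<bar> \<le> C * exp (\<nu>*t)"
  shows "lpnorm p f \<le> C * Aexp p \<nu>"
  using p
proof (cases rule: p_cases)
  case 1
  show ?thesis
  proof (cases "(\<lambda>x. ereal \<bar>f x\<bar>) \<in> borel_measurable (lebesgue_on {0..1})")
    case True
    have "esssup (lebesgue_on {0..1}) (\<lambda>x. ereal \<bar>f x\<bar>) \<le> ereal (C * exp \<nu>)"
    proof (rule esssup_I[OF True], rule AE_I2)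
      fix x assume "x \<in> space (lebesgue_on {0..1::real})"
      then have x: "x \<in> {0..1}" by simp
      have "\<bar>f x\<bar> \<le> C * exp (\<nu>*x)" using bd[OF x] .
      also have "\<dots> \<le> C * exp \<nu>" using x nu C by (intro mult_left_mono) auto
      finally show "ereal \<bar>f x\<bar> \<le> ereal (C * exp \<nu>)" by simp
    qed
    moreover have "0 \<le> C * exp \<nu>" using C by simp
    ultimately have "real_of_ereal (esssup (lebesgue_on {0..1}) (\<lambda>x. ereal \<bar>f x\<bar>)) \<le> C * exp \<nu>"
      using esssup_nonneg[of f] by (cases "esssup (lebesgue_on {0..1}) (\<lambda>x. ereal \<bar>f x\<bar>)") auto
    then show ?thesis using 1 by (simp add: lpnorm_def Aexp_def)
  next
    case False
    then have "esssup (lebesgue_on {0..1}) (\<lambda>x. ereal \<bar>f x\<bar>) = \<infinity>"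
      by (simp add: esssup_non_measurable top_ereal_def)
    then show ?thesis using 1 C by (simp add: lpnorm_def Aexp_def)
  qed
next
  case (2 r)
  have r0: "r > 0" using 2 by simp
  define g where "g t = C powr r * exp ((r*\<nu>)*t)" for t
  have gi: "integrable (lebesgue_on {0..1}) g"
    unfolding g_def by (intro continuous_imp_integrable_real continuous_intros)
  have "integral\<^sup>L (lebesgue_on {0..1}) (\<lambda>t. \<bar>f t\<bar> powr r) \<le> integral\<^sup>L (lebesgue_on {0..1}) g"
  proof (rule integral_mono'[OF gi])
    fix t assume "t \<in> space (lebesgue_on {0..1::real})"
    then have t: "t \<in> {0..1}" by simp
    have "\<bar>f t\<bar> powr r \<le> (C * exp (\<nu>*t)) powr r"
      using bd[OF t] r0 by (intro powr_mono2) auto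
    also have "\<dots> = g t" unfolding g_def using C
      by (simp add: powr_mult exp_powr_real mult_ac)
    finally show "\<bar>f t\<bar> powr r \<le> g t" .
    show "0 \<le> g t" unfolding g_def by simp
  qed
  also have "integral\<^sup>L (lebesgue_on {0..1}) g = C powr r * ((exp (r*\<nu>) - 1)/(r*\<nu>))"
    unfolding g_def using r0 nu by (simp add: lint_exp01)
  also have "\<dots> = C powr r * (exp (r*\<nu>) * ((1 - exp (-r*\<nu>))/(r*\<nu>)))"
  proof -
    have e: "exp (r*\<nu>) * exp (-r*\<nu>) = 1" by (simp add: exp_minus_inverse)
    have "exp (r*\<nu>) * ((1 - exp (-r*\<nu>))/(r*\<nu>)) = (exp (r*\<nu>) - exp (r*\<nu>) * exp (-r*\<nu>))/(r*\<nu>)"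
      by (simp add: algebra_simps diff_divide_distrib)
    also have "\<dots> = (exp (r*\<nu>) - 1)/(r*\<nu>)" using e by simp
    finally have X: "exp (r*\<nu>) * ((1 - exp (-r*\<nu>))/(r*\<nu>)) = (exp (r*\<nu>) - 1)/(r*\<nu>)" .
    show ?thesis by (simp only: X)
  qed
  finally have I: "integral\<^sup>L (lebesgue_on {0..1}) (\<lambda>t. \<bar>f t\<bar> powr r) \<le> C powr r * (exp (r*\<nu>) * ((1 - exp (-r*\<nu>))/(r*\<nu>)))" .
  have Y: "0 \<le> (1 - exp (-r*\<nu>))/(r*\<nu>)" using r0 nu by (auto intro!: divide_nonneg_pos)
  have "lpnorm p f = (integral\<^sup>L (lebesgue_on {0..1}) (\<lambda>t. \<bar>f t\<bar> powr r)) powr (1/r)"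
    using 2 by (simp add: lpnorm_def)
  also have "\<dots> \<le> (C powr r * (exp (r*\<nu>) * ((1 - exp (-r*\<nu>))/(r*\<nu>)))) powr (1/r)"
    using I r0 by (intro powr_mono2) (auto intro!: integral_nonneg_AE)
  also have "\<dots> = C * (exp \<nu> * ((1 - exp (-r*\<nu>))/(r*\<nu>)) powr (1/r))"
  proof -
    define Y where "Y = (1 - exp (-r*\<nu>))/(r*\<nu>)"
    have Y0: "0 \<le> Y" using Y Y_def by simp
    have "(C powr r * (exp (r*\<nu>) * Y)) powr (1/r) = (C powr r) powr (1/r) * ((exp (r*\<nu>)) powr (1/r) * Y powr (1/r))"
      using C Y0 by (simp add: powr_mult)
    also have "(C powr r) powr (1/r) = C" using C r0 by (simp add: powr_powr)
    also have "(exp (r*\<nu>)) powr (1/r) = exp \<nu>" using r0 by (simp add: exp_powr_real)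
    finally show ?thesis unfolding Y_def .
  qed
  also have "\<dots> = C * Aexp p \<nu>"
    using 2 by (simp add: Aexp_def)
  finally show ?thesis .
qed


lemma AE_zero_of_integral_powr:
  fixes f :: "'a \<Rightarrow> real"
  assumes "r > 0" "integrable M (\<lambda>x. f x powr r)" "\<And>x. x \<in> space M \<Longrightarrow> 0 \<le> f x"
    "integral\<^sup>L M (\<lambda>x. f x powr r) = 0"
  shows "AE x in M. f x = 0"
proof -
  have "AE x in M. f x powr r = 0"
    using assms by (subst integral_nonneg_eq_0_iff_AE[symmetric]) auto
  then show ?thesis by (rule eventually_mono) simp
qed

lemma holder:
  fixes f g :: "'a \<Rightarrow> real"
  assumes r: "r > 1" and q: "q = r/(r-1)"
    and fm: "f \<in> borel_measurable M" and gm: "g \<in> borel_measurable M"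
    and f0: "\<And>x. x \<in> space M \<Longrightarrow> 0 \<le> f x" and g0: "\<And>x. x \<in> space M \<Longrightarrow> 0 \<le> g x"
    and fi: "integrable M (\<lambda>x. f x powr r)" and gi: "integrable M (\<lambda>x. g x powr q)"
  shows "integrable M (\<lambda>x. f x * g x)"
    "integral\<^sup>L M (\<lambda>x. f x * g x) \<le> (integral\<^sup>L M (\<lambda>x. f x powr r)) powr (1/r) * (integral\<^sup>L M (\<lambda>x. g x powr q)) powr (1/q)"
proof -
  have q1: "q > 1" unfolding q using r by (simp add: field_simps)
  have rq: "1/r + 1/q = 1" unfolding q using r by (simp add: field_simps)
  have young: "a * b \<le> a powr r / r + b powr q / q" if "a \<ge> 0" "b \<ge> 0" for a b :: real
    by (rule Youngs_inequality[OF r q1 rq that])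
  show fgi: "integrable M (\<lambda>x. f x * g x)"
  proof -
    have i: "integrable M (\<lambda>x. f x powr r / r + g x powr q / q)" using fi gi by auto
    have m: "(\<lambda>x. f x * g x) \<in> borel_measurable M" using fm gm by measurable
    have ae: "AE x in M. norm (f x * g x) \<le> norm (f x powr r / r + g x powr q / q)"
    proof (rule AE_I2)
      fix x assume x: "x \<in> space M"
      have "f x * g x \<le> f x powr r / r + g x powr q / q" using young f0[OF x] g0[OF x] by simp
      moreover have "0 \<le> f x * g x" using f0[OF x] g0[OF x] by simp
      ultimately show "norm (f x * g x) \<le> norm (f x powr r / r + g x powr q / q)" by simp
    qed
    show ?thesis by (rule Bochner_Integration.integrable_bound[OF i m ae])
  qed
  define F where "F = integral\<^sup>L M (\<lambda>x. f x powr r)"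
  define G where "G = integral\<^sup>L M (\<lambda>x. g x powr q)"
  have F0: "F \<ge> 0" unfolding F_def by (intro integral_nonneg_AE) auto
  have G0: "G \<ge> 0" unfolding G_def by (intro integral_nonneg_AE) auto
  have fg0: "0 \<le> integral\<^sup>L M (\<lambda>x. f x * g x)" using f0 g0 by (intro integral_nonneg_AE AE_I2) auto
  show "integral\<^sup>L M (\<lambda>x. f x * g x) \<le> F powr (1/r) * G powr (1/q)"
  proof (cases "F = 0 \<or> G = 0")
    case True
    have "AE x in M. f x * g x = 0"
    proof (cases "F = 0")
      case True
      then have "AE x in M. f x = 0" using r f0 fi unfolding F_def by (intro AE_zero_of_integral_powr) auto
      then show ?thesis by (rule eventually_mono) auto
    next
      case False
      then have "G = 0" using \<open>F = 0 \<or> G = 0\<close> by simp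
      then have "AE x in M. g x = 0" using q1 g0 gi unfolding G_def by (intro AE_zero_of_integral_powr) auto
      then show ?thesis by (rule eventually_mono) auto
    qed
    then have "integral\<^sup>L M (\<lambda>x. f x * g x) = 0" by (simp add: integral_eq_zero_AE)
    then show ?thesis using F0 G0 by simp
  next
    case False
    then have Fp: "F > 0" and Gp: "G > 0" using F0 G0 by auto
    define a where "a = F powr (1/r)"
    define b where "b = G powr (1/q)"
    have ap: "a > 0" and bp: "b > 0" unfolding a_def b_def using Fp Gp by auto
    have ar: "a powr r = F" unfolding a_def using Fp r by (simp add: powr_powr)
    have bq: "b powr q = G" unfolding b_def using Gp q1 by (simp add: powr_powr)
    have pt: "f x * g x / (a*b) \<le> f x powr r / (r*F) + g x powr q / (q*G)" if x: "x \<in> space M" for x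
    proof -
      have "f x * g x / (a*b) = (f x / a) * (g x / b)" by simp
      also have "\<dots> \<le> (f x / a) powr r / r + (g x / b) powr q / q"
        using f0[OF x] g0[OF x] ap bp by (intro young) auto
      also have "(f x / a) powr r = f x powr r / F" using f0[OF x] ap ar by (simp add: powr_divide)
      also have "(g x / b) powr q = g x powr q / G" using g0[OF x] bp bq by (simp add: powr_divide)
      finally show ?thesis by (simp add: ac_simps)
    qed
    have "integral\<^sup>L M (\<lambda>x. f x * g x) / (a*b) = integral\<^sup>L M (\<lambda>x. f x * g x / (a*b))" by simp
    also have "\<dots> \<le> integral\<^sup>L M (\<lambda>x. f x powr r / (r*F) + g x powr q / (q*G))"
      using pt fgi fi gi by (intro integral_mono) auto
    also have "\<dots> = F / (r*F) + G / (q*G)"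
      using fi gi unfolding F_def G_def by simp
    also have "\<dots> = 1" using rq Fp Gp by simp
    finally show ?thesis using ap bp unfolding a_def b_def by (simp add: field_simps)
  qed
qed


lemma ident_leb[measurable]: "(\<lambda>x::real. x) \<in> borel_measurable (lebesgue_on S)"
  by (intro measurable_restrict_space1 measurable_completion) simp

lemma inLp_meas: "inLp p u \<Longrightarrow> u \<in> borel_measurable (lebesgue_on {0..1})"
  unfolding inLp_def by simp

lemma AE_01: "AE x in lebesgue_on {0..1::real}. x \<in> {0..1}"
  by (rule AE_I2) simp

lemma holder_exp:
  assumes p: "1 \<le> p" and nu: "\<nu> > 0" and u: "inLp p u"
  shows "integrable (lebesgue_on {0..1}) (\<lambda>y. exp (-\<nu>*y) * \<bar>u y\<bar>)"
    "integral\<^sup>L (lebesgue_on {0..1}) (\<lambda>y. exp (-\<nu>*y) * \<bar>u y\<bar>) \<le> Bexp p \<nu> * lpnorm p u"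
proof -
  have um: "u \<in> borel_measurable (lebesgue_on {0..1})" using u by (rule inLp_meas)
  have m: "(\<lambda>y. exp (-\<nu>*y) * \<bar>u y\<bar>) \<in> borel_measurable (lebesgue_on {0..1})"
    using um by measurable
  have "integrable (lebesgue_on {0..1}) (\<lambda>y. exp (-\<nu>*y) * \<bar>u y\<bar>) \<and>
    integral\<^sup>L (lebesgue_on {0..1}) (\<lambda>y. exp (-\<nu>*y) * \<bar>u y\<bar>) \<le> Bexp p \<nu> * lpnorm p u"
    using p
  proof (cases rule: p_cases)
    case 1
    define E where "E = esssup (lebesgue_on {0..1}) (\<lambda>x. ereal \<bar>u x\<bar>)"
    have Efin: "E < \<infinity>" using u 1 unfolding inLp_def E_def by simp
    have E0: "0 \<le> E" unfolding E_def by (rule esssup_nonneg)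
    define M where "M = real_of_ereal E"
    have EM: "E = ereal M" unfolding M_def using Efin E0 by (cases E) auto
    have M0: "M \<ge> 0" using E0 EM by simp
    have ae: "AE x in lebesgue_on {0..1}. \<bar>u x\<bar> \<le> M"
      using esssup_AE[of "\<lambda>x. ereal \<bar>u x\<bar>" "lebesgue_on {0..1}"]
      unfolding E_def[symmetric] EM by simp
    have ae2: "AE x in lebesgue_on {0..1}. exp (-\<nu>*x) * \<bar>u x\<bar> \<le> exp (-\<nu>*x) * M"
      using ae by (rule eventually_mono) (simp add: mult_left_mono)
    have ci: "integrable (lebesgue_on {0..1}) (\<lambda>x. exp (-\<nu>*x) * M)"
      by (intro continuous_imp_integrable_real continuous_intros)
    have ii: "integrable (lebesgue_on {0..1}) (\<lambda>y. exp (-\<nu>*y) * \<bar>u y\<bar>)"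
    proof (rule Bochner_Integration.integrable_bound[OF ci m])
      show "AE x in lebesgue_on {0..1}. norm (exp (-\<nu>*x) * \<bar>u x\<bar>) \<le> norm (exp (-\<nu>*x) * M)"
        using ae2 by (rule eventually_mono) (use M0 in \<open>simp add: abs_mult\<close>)
    qed
    have "integral\<^sup>L (lebesgue_on {0..1}) (\<lambda>y. exp (-\<nu>*y) * \<bar>u y\<bar>) \<le> integral\<^sup>L (lebesgue_on {0..1}) (\<lambda>x. exp (-\<nu>*x) * M)"
      by (rule integral_mono_AE[OF ii ci ae2])
    also have "\<dots> = M * ((exp (-\<nu>) - 1)/(-\<nu>))"
      using lint_exp01[of "-\<nu>"] nu by (simp add: mult.commute)
    also have "\<dots> = Bexp p \<nu> * lpnorm p u"
      using 1 nu unfolding Bexp_def lpnorm_def E_def[symmetric] M_def[symmetric]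
      by (simp add: field_simps)
    finally show ?thesis using ii by simp
  next
    case (2 r)
    have ur: "integrable (lebesgue_on {0..1}) (\<lambda>x. \<bar>u x\<bar> powr r)"
      using u 2 unfolding inLp_def by simp
    show ?thesis
    proof (cases "r = 1")
      case True
      have ui: "integrable (lebesgue_on {0..1}) (\<lambda>x. \<bar>u x\<bar>)" using ur True by simp
      have ii: "integrable (lebesgue_on {0..1}) (\<lambda>y. exp (-\<nu>*y) * \<bar>u y\<bar>)"
      proof (rule Bochner_Integration.integrable_bound[OF ui m], rule AE_I2)
        fix x assume "x \<in> space (lebesgue_on {0..1::real})"
        then have "exp (-\<nu>*x) \<le> 1" using nu by simp
        then show "norm (exp (-\<nu>*x) * \<bar>u x\<bar>) \<le> norm \<bar>u x\<bar>"
          by (simp add: abs_mult mult_left_le_one_le)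
      qed
      have "integral\<^sup>L (lebesgue_on {0..1}) (\<lambda>y. exp (-\<nu>*y) * \<bar>u y\<bar>) \<le> integral\<^sup>L (lebesgue_on {0..1}) (\<lambda>y. \<bar>u y\<bar>)"
      proof (rule integral_mono[OF ii ui])
        fix x assume "x \<in> space (lebesgue_on {0..1::real})"
        then have "exp (-\<nu>*x) \<le> 1" using nu by simp
        then show "exp (-\<nu>*x) * \<bar>u x\<bar> \<le> \<bar>u x\<bar>"
          by (simp add: mult_left_le_one_le)
      qed
      also have "\<dots> = Bexp p \<nu> * lpnorm p u"
        using 2 True by (simp add: Bexp_def lpnorm_def one_ereal_def)
      finally show ?thesis using ii by simp
    next
      case False
      then have r1: "r > 1" using 2 by simp
      define q where "q = r/(r-1)"
      have q1: "q > 1" unfolding q_def using r1 by (simp add: field_simps)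
      have gm: "(\<lambda>y. exp (-\<nu>*y)) \<in> borel_measurable (lebesgue_on {0..1})" by measurable
      have gq: "(\<lambda>x. exp (-\<nu>*x) powr q) = (\<lambda>x. exp ((-q*\<nu>)*x))"
        by (simp add: exp_powr_real mult_ac)
      have gi: "integrable (lebesgue_on {0..1}) (\<lambda>x. exp (-\<nu>*x) powr q)"
        unfolding gq by (intro continuous_imp_integrable_real continuous_intros)
      have ab: "(\<lambda>x. \<bar>u x\<bar>) \<in> borel_measurable (lebesgue_on {0..1})" using um by measurable
      note H = holder[OF r1 q_def ab gm _ _ ur gi]
      have ii: "integrable (lebesgue_on {0..1}) (\<lambda>y. exp (-\<nu>*y) * \<bar>u y\<bar>)"
        using H(1) by (simp add: mult.commute)
      have "integral\<^sup>L (lebesgue_on {0..1}) (\<lambda>y. exp (-\<nu>*y) * \<bar>u y\<bar>) = integral\<^sup>L (lebesgue_on {0..1}) (\<lambda>y. \<bar>u y\<bar> * exp (-\<nu>*y))"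
        by (simp add: mult.commute)
      also have "\<dots> \<le> (integral\<^sup>L (lebesgue_on {0..1}) (\<lambda>x. \<bar>u x\<bar> powr r)) powr (1/r) *
          (integral\<^sup>L (lebesgue_on {0..1}) (\<lambda>x. exp (-\<nu>*x) powr q)) powr (1/q)"
        using H(2) by simp
      also have "integral\<^sup>L (lebesgue_on {0..1}) (\<lambda>x. exp (-\<nu>*x) powr q) = (1 - exp (-q*\<nu>))/(q*\<nu>)"
        unfolding gq using q1 nu lint_exp01[of "-q*\<nu>"] by (simp add: field_simps)
      also have "(integral\<^sup>L (lebesgue_on {0..1}) (\<lambda>x. \<bar>u x\<bar> powr r)) powr (1/r) * ((1 - exp (-q*\<nu>))/(q*\<nu>)) powr (1/q)
          = Bexp p \<nu> * lpnorm p u"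
        using 2 r1 unfolding Bexp_def lpnorm_def q_def by (simp add: one_ereal_def Let_def)
      finally show ?thesis using ii by simp
    qed
  qed
  then show "integrable (lebesgue_on {0..1}) (\<lambda>y. exp (-\<nu>*y) * \<bar>u y\<bar>)"
    "integral\<^sup>L (lebesgue_on {0..1}) (\<lambda>y. exp (-\<nu>*y) * \<bar>u y\<bar>) \<le> Bexp p \<nu> * lpnorm p u" by auto
qed


lemma Aexp_nonneg: "\<nu> > 0 \<Longrightarrow> 0 \<le> Aexp p \<nu>"
  unfolding Aexp_def by simp

lemma Bexp_nonneg: "\<nu> > 0 \<Longrightarrow> 0 \<le> Bexp p \<nu>"
  unfolding Bexp_def Let_def by (auto intro!: divide_nonneg_pos)

lemma rank1_bound:
  assumes p: "1 \<le> p" and nu: "\<nu> > 0" and E: "E \<ge> 0"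
    and bd: "\<And>u t. inLp p u \<Longrightarrow> t \<in> {0..1} \<Longrightarrow>
       \<bar>T u t\<bar> \<le> E * exp (\<nu>*t) * integral\<^sup>L (lebesgue_on {0..1}) (\<lambda>y. exp (-\<nu>*y) * \<bar>u y\<bar>)"
  shows "\<And>u. inLp p u \<Longrightarrow> lpnorm p u \<le> 1 \<Longrightarrow> lpnorm p (T u) \<le> E * (Aexp p \<nu> * Bexp p \<nu>)"
proof -
  fix u assume u: "inLp p u" and u1: "lpnorm p u \<le> 1"
  define I where "I = integral\<^sup>L (lebesgue_on {0..1}) (\<lambda>y. exp (-\<nu>*y) * \<bar>u y\<bar>)"
  have I0: "0 \<le> I" unfolding I_def by (intro integral_nonneg_AE AE_I2) simp
  have IB: "I \<le> Bexp p \<nu> * lpnorm p u" unfolding I_def by (rule holder_exp(2)[OF p nu u])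
  also have "\<dots> \<le> Bexp p \<nu>" using u1 Bexp_nonneg[OF nu, of p] by (simp add: mult_left_le)
  finally have IB1: "I \<le> Bexp p \<nu>" .
  have "lpnorm p (T u) \<le> (E * I) * Aexp p \<nu>"
    by (rule lp_upper_exp[OF p nu]) (use E I0 bd[OF u] in \<open>auto simp: I_def mult_ac\<close>)
  also have "\<dots> \<le> (E * Bexp p \<nu>) * Aexp p \<nu>"
    using IB1 E Aexp_nonneg[OF nu, of p] by (intro mult_right_mono mult_left_mono) auto
  finally show "lpnorm p (T u) \<le> E * (Aexp p \<nu> * Bexp p \<nu>)" by (simp add: mult_ac)
qed

lemma setint_01:
  fixes f :: "real \<Rightarrow> real"
  assumes "t \<in> {0..1}"
  shows "(LINT y:{0..t}|lebesgue. f y) = integral\<^sup>L (lebesgue_on {0..1}) (\<lambda>y. indicator {0..t} y * f y)"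
proof -
  have "integral\<^sup>L (lebesgue_on {0..1}) (\<lambda>y. indicator {0..t} y * f y) =
      integral\<^sup>L lebesgue (\<lambda>y. indicator {0..1} y *\<^sub>R (indicator {0..t} y * f y))"
    by (rule integral_restrict_space) simp
  also have "\<dots> = integral\<^sup>L lebesgue (\<lambda>y. indicator {0..t} y *\<^sub>R f y)"
    using assms by (intro Bochner_Integration.integral_cong) (auto simp: indicator_def)
  finally show ?thesis by (simp add: set_lebesgue_integral_def)
qed

lemma kernel_le:
  fixes n x :: real
  assumes "n \<ge> 1" "x \<ge> 0"
  shows "x powr (n-1) \<le> exp ((n-1)*(x-1))"
proof (cases "x = 0")
  case True then show ?thesis by simp
next
  case False
  then have x: "x > 0" using assms by simp
  have "(n-1) * ln x \<le> (n-1) * (x-1)" using assms ln_le_minus_one[OF x] by (intro mult_left_mono) auto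
  then show ?thesis using x by (simp add: powr_def)
qed

lemma abs_integral_le: "\<bar>integral\<^sup>L M (f::_\<Rightarrow>real)\<bar> \<le> integral\<^sup>L M (\<lambda>x. \<bar>f x\<bar>)"
  using integral_norm_bound[of M f] by simp

lemma Vk_integrand_meas[measurable]:
  fixes t n \<mu> :: real and u :: "real \<Rightarrow> real"
  assumes [measurable]: "u \<in> borel_measurable (lebesgue_on {0..1})"
  shows "(\<lambda>y. indicator {0..t} y * (((t - y) powr (n - 1) * exp (\<mu> * (t - y)) / Gamma n) * u y))
     \<in> borel_measurable (lebesgue_on {0..1})"
  by measurable

lemma Vk_bound:
  assumes p: "1 \<le> p" and n: "n \<ge> 1" and lam: "n - 1 + \<mu> > 0" and u: "inLp p u" and t: "t \<in> {0..1}"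
  shows "\<bar>Vk \<mu> n u t\<bar> \<le> (exp (-(n-1)) / Gamma n) * exp ((n-1+\<mu>)*t) *
     integral\<^sup>L (lebesgue_on {0..1}) (\<lambda>y. exp (-(n-1+\<mu>)*y) * \<bar>u y\<bar>)"
proof -
  define l where "l = n - 1 + \<mu>"
  define c where "c = exp (-(n-1)) / Gamma n"
  have G: "Gamma n > 0" using n by simp
  have c0: "c \<ge> 0" unfolding c_def using G by simp
  have hi: "integrable (lebesgue_on {0..1}) (\<lambda>y. exp (-l*y) * \<bar>u y\<bar>)"
    unfolding l_def by (rule holder_exp(1)[OF p lam u])
  have eq: "Vk \<mu> n u t = integral\<^sup>L (lebesgue_on {0..1})
      (\<lambda>y. indicator {0..t} y * (((t - y) powr (n - 1) * exp (\<mu> * (t - y)) / Gamma n) * u y))"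
    unfolding Vk_def by (rule setint_01[OF t])
  have "\<bar>integral\<^sup>L (lebesgue_on {0..1})
      (\<lambda>y. indicator {0..t} y * (((t - y) powr (n - 1) * exp (\<mu> * (t - y)) / Gamma n) * u y))\<bar> \<le> integral\<^sup>L (lebesgue_on {0..1})
      (\<lambda>y. \<bar>indicator {0..t} y * (((t - y) powr (n - 1) * exp (\<mu> * (t - y)) / Gamma n) * u y)\<bar>)"
    by (rule abs_integral_le)
  also have "\<dots> \<le> integral\<^sup>L (lebesgue_on {0..1}) (\<lambda>y. (c * exp (l*t)) * (exp (-l*y) * \<bar>u y\<bar>))"
  proof (rule integral_mono')
    show "integrable (lebesgue_on {0..1}) (\<lambda>y. (c * exp (l*t)) * (exp (-l*y) * \<bar>u y\<bar>))"
      using hi by simp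
    fix y assume "y \<in> space (lebesgue_on {0..1::real})"
    show "0 \<le> (c * exp (l*t)) * (exp (-l*y) * \<bar>u y\<bar>)" using c0 by simp
    show "\<bar>indicator {0..t} y * (((t - y) powr (n - 1) * exp (\<mu> * (t - y)) / Gamma n) * u y)\<bar>
        \<le> (c * exp (l*t)) * (exp (-l*y) * \<bar>u y\<bar>)"
    proof (cases "y \<in> {0..t}")
      case False then show ?thesis using c0 by simp
    next
      case True
      then have ty: "t - y \<ge> 0" by simp
      have "(t - y) powr (n - 1) * exp (\<mu> * (t - y)) \<le> exp ((n-1)*((t-y)-1)) * exp (\<mu> * (t - y))"
        using kernel_le[OF n ty] by (intro mult_right_mono) auto
      also have "\<dots> = exp (-(n-1)) * (exp (l*t) * exp (-l*y))"
      proof -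
        have "(n-1)*((t-y)-1) + \<mu>*(t-y) = -(n-1) + (l*t + -l*y)" unfolding l_def by (simp add: algebra_simps)
        then show ?thesis by (simp only: exp_add[symmetric])
      qed
      finally have k: "(t - y) powr (n - 1) * exp (\<mu> * (t - y)) / Gamma n \<le> c * exp (l*t) * exp (-l*y)"
        using G unfolding c_def by (simp add: divide_right_mono mult_ac)
      have "\<bar>indicator {0..t} y * (((t - y) powr (n - 1) * exp (\<mu> * (t - y)) / Gamma n) * u y)\<bar>
          = ((t - y) powr (n - 1) * exp (\<mu> * (t - y)) / Gamma n) * \<bar>u y\<bar>"
        using True G by (simp add: abs_mult)
      also have "\<dots> \<le> (c * exp (l*t) * exp (-l*y)) * \<bar>u y\<bar>"
        using k by (intro mult_right_mono) auto
      finally show ?thesis by (simp add: mult_ac)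
    qed
  qed
  also have "\<dots> = c * exp (l*t) * integral\<^sup>L (lebesgue_on {0..1}) (\<lambda>y. exp (-l*y) * \<bar>u y\<bar>)"
    by simp
  finally show ?thesis unfolding c_def l_def eq .
qed

lemma exp_half_bound:
  fixes z :: real assumes "z \<ge> 0" shows "z^2 \<le> 4 * exp z"
proof -
  have "z/2 \<le> exp (z/2)" using exp_ge_add_one_self[of "z/2"] by linarith
  then have "(z/2)^2 \<le> (exp (z/2))^2" using assms by (intro power_mono) auto
  also have "(exp (z/2))^2 = exp z" by (simp add: power2_eq_square exp_add[symmetric])
  finally show ?thesis by (simp add: power2_eq_square)
qed

lemma exp_neg_bound:
  fixes N a :: real assumes "N > 0" "a > 0"
  shows "exp (-(a*N)) \<le> 1 / (a*N)"
proof -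
  have "a*N \<le> exp (a*N)" using exp_ge_add_one_self[of "a*N"] by linarith
  then show ?thesis using assms by (simp add: exp_minus field_simps)
qed

lemma Dkernel_le:
  fixes N x :: real
  assumes N: "N \<ge> 2" and x1: "x \<le> 1"
  shows "\<bar>(if x \<ge> 0 then x powr N else 0) - exp (N*(x-1))\<bar> \<le> (32/N) * exp ((N/2)*(x-1))"
proof -
  have Np: "N > 0" using N by simp
  have split: "exp (N*(x-1)) = exp ((N/2)*(x-1)) * exp ((N/2)*(x-1))"
  proof -
    have "N*(x-1) = (N/2)*(x-1) + (N/2)*(x-1)" by simp
    then show ?thesis by (metis exp_add)
  qed
  have e0: "exp (N*(x-1)) \<le> (32/N) * exp ((N/2)*(x-1))" if "x \<le> 1/2"
  proof -
    have "(N/2)*(x-1) \<le> (N/2)*(-1/2)" using that Np by (intro mult_left_mono) auto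
    then have "exp ((N/2)*(x-1)) \<le> exp (-((1/4)*N))" by simp
    also have "\<dots> \<le> 1/((1/4)*N)" by (rule exp_neg_bound) (use Np in auto)
    also have "\<dots> \<le> 32/N" using Np by (simp add: field_simps)
    finally have "exp ((N/2)*(x-1)) \<le> 32/N" .
    then show ?thesis unfolding split by (intro mult_right_mono) auto
  qed
  show ?thesis
  proof (cases "x > 0")
    case False
    then have "(if x \<ge> 0 then x powr N else 0) = 0" by auto
    then show ?thesis using e0 False by simp
  next
    case True
    have k: "x powr N \<le> exp (N*(x-1))" using kernel_le[of "N+1" x] True N by simp
    have k0: "0 \<le> x powr N" by simp
    have "\<bar>(if x \<ge> 0 then x powr N else 0) - exp (N*(x-1))\<bar> = exp (N*(x-1)) - x powr N"
      using True k by simp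
    also have "\<dots> \<le> (32/N) * exp ((N/2)*(x-1))"
    proof (cases "x \<le> 1/2")
      case True
      then show ?thesis using e0[OF True] k0 by linarith
    next
      case False
      define y where "y = 1 - x"
      have y0: "0 \<le> y" "y \<le> 1/2" using False x1 unfolding y_def by auto
      have lnx: "ln x \<ge> -y - 2*y^2" using ln_one_minus_pos_lower_bound[OF y0] unfolding y_def by simp
      define h where "h = x - 1 - ln x"
      have h2: "h \<le> 2*y^2" using lnx unfolding h_def y_def by simp
      have ee: "N*(x-1) + -(N*h) = N * ln x" unfolding h_def by (simp add: algebra_simps)
      have "x powr N = exp (N * ln x)" using True by (simp add: powr_def)
      also have "\<dots> = exp (N*(x-1) + -(N*h))" by (simp only: ee)
      also have "\<dots> = exp (N*(x-1)) * exp (-(N*h))" by (rule exp_add)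
      finally have xp: "x powr N = exp (N*(x-1)) * exp (-(N*h))" .
      have "exp (N*(x-1)) - x powr N = exp (N*(x-1)) * (1 - exp (-(N*h)))"
        unfolding xp by (simp add: algebra_simps)
      also have "\<dots> \<le> exp (N*(x-1)) * (N*h)"
        using exp_ge_add_one_self[of "-(N*h)"] by (intro mult_left_mono) auto
      also have "\<dots> \<le> exp (N*(x-1)) * (2*N*y^2)"
        using h2 Np by (intro mult_left_mono) auto
      also have "\<dots> = exp ((N/2)*(x-1)) * (exp (-(N*y/2)) * (2*N*y^2))"
      proof -
        have "(N/2)*(x-1) = -(N*y/2)" unfolding y_def by (simp add: field_simps)
        then have "exp ((N/2)*(x-1)) = exp (-(N*y/2))" by simp
        then show ?thesis unfolding split by simp
      qed
      also have "\<dots> \<le> exp ((N/2)*(x-1)) * (32/N)"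
      proof (rule mult_left_mono)
        have z: "(N*y/2)^2 \<le> 4 * exp (N*y/2)" using y0 Np by (intro exp_half_bound) auto
        have "exp (-(N*y/2)) * (2*N*y^2) = (8/N) * ((N*y/2)^2 * exp (-(N*y/2)))"
          using Np by (simp add: field_simps power2_eq_square)
        also have "\<dots> \<le> (8/N) * (4 * exp (N*y/2) * exp (-(N*y/2)))"
          using z Np by (intro mult_left_mono mult_right_mono) auto
        also have "\<dots> = 32/N" by (simp add: exp_minus field_simps)
        finally show "exp (-(N*y/2)) * (2*N*y^2) \<le> 32/N" .
      qed simp
      finally show ?thesis by (simp add: mult_ac)
    qed
    finally show ?thesis .
  qed
qed


lemma Vk_eq:
  assumes "t \<in> {0..1}"
  shows "Vk \<mu> n u t = integral\<^sup>L (lebesgue_on {0..1})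
      (\<lambda>y. indicator {0..t} y * (((t - y) powr (n - 1) * exp (\<mu> * (t - y)) / Gamma n) * u y))"
  unfolding Vk_def by (rule setint_01[OF assms])

lemma Sop_eq: "Sop la u t = integral\<^sup>L (lebesgue_on {0..1}) (\<lambda>y. exp (la*(t-y)) * u y)"
proof -
  have "Sop la u t = integral\<^sup>L (lebesgue_on {0..1}) (\<lambda>y. indicator {0..1} y * (exp (la*(t-y)) * u y))"
    unfolding Sop_def by (rule setint_01) simp
  also have "\<dots> = integral\<^sup>L (lebesgue_on {0..1}) (\<lambda>y. exp (la*(t-y)) * u y)"
    by (intro Bochner_Integration.integral_cong) auto
  finally show ?thesis .
qed

lemma Vk_integrand_le:
  fixes n t y \<mu> :: real
  assumes n: "n \<ge> 1" and y: "y \<in> {0..1}"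
  shows "\<bar>indicator {0..t} y * (((t - y) powr (n - 1) * exp (\<mu> * (t - y)) / Gamma n) * u y)\<bar>
        \<le> (exp (-(n-1)) / Gamma n * exp ((n-1+\<mu>)*t)) * (exp (-(n-1+\<mu>)*y) * \<bar>u y\<bar>)"
proof -
  define l where "l = n - 1 + \<mu>"
  define c where "c = exp (-(n-1)) / Gamma n"
  have G: "Gamma n > 0" using n by simp
  have c0: "c \<ge> 0" unfolding c_def using G by simp
  show ?thesis
  proof (cases "y \<in> {0..t}")
    case False then show ?thesis using G by (auto intro!: divide_nonneg_pos mult_nonneg_nonneg)
  next
    case True
    then have ty: "t - y \<ge> 0" by simp
    have "(t - y) powr (n - 1) * exp (\<mu> * (t - y)) \<le> exp ((n-1)*((t-y)-1)) * exp (\<mu> * (t - y))"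
      using kernel_le[OF n ty] by (intro mult_right_mono) auto
    also have "\<dots> = exp (-(n-1)) * (exp (l*t) * exp (-l*y))"
    proof -
      have "(n-1)*((t-y)-1) + \<mu>*(t-y) = -(n-1) + (l*t + -l*y)" unfolding l_def by (simp add: algebra_simps)
      then show ?thesis by (simp only: exp_add[symmetric])
    qed
    finally have k: "(t - y) powr (n - 1) * exp (\<mu> * (t - y)) / Gamma n \<le> c * exp (l*t) * exp (-l*y)"
      using G unfolding c_def by (simp add: divide_right_mono mult_ac)
    have "\<bar>indicator {0..t} y * (((t - y) powr (n - 1) * exp (\<mu> * (t - y)) / Gamma n) * u y)\<bar>
        = ((t - y) powr (n - 1) * exp (\<mu> * (t - y)) / Gamma n) * \<bar>u y\<bar>"
      using True G by (simp add: abs_mult)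
    also have "\<dots> \<le> (c * exp (l*t) * exp (-l*y)) * \<bar>u y\<bar>"
      using k by (intro mult_right_mono) auto
    finally show ?thesis unfolding c_def l_def by (simp add: mult_ac)
  qed
qed


lemma D_bound:
  fixes n \<mu> t :: real
  assumes p: "1 \<le> p" and n: "n \<ge> 3" and lam: "n - 1 + \<mu> > 0" and u: "inLp p u" and t: "t \<in> {0..1}"
  shows "\<bar>Vk \<mu> n u t - (exp (-(n-1)) / Gamma n) * Sop (n-1+\<mu>) u t\<bar> \<le>
    (32 * exp \<bar>\<mu>\<bar> * exp (-((n-1)/2)) / ((n-1) * Gamma n)) * exp (((n-1)/2)*t) *
     integral\<^sup>L (lebesgue_on {0..1}) (\<lambda>y. exp (-((n-1)/2)*y) * \<bar>u y\<bar>)"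
proof -
  define l where "l = n - 1 + \<mu>"
  define c where "c = exp (-(n-1)) / Gamma n"
  define N where "N = n - 1"
  define \<nu> where "\<nu> = (n-1)/2"
  define E where "E = 32 * exp \<bar>\<mu>\<bar> * exp (-((n-1)/2)) / ((n-1) * Gamma n)"
  have n1: "n \<ge> 1" using n by simp
  have G: "Gamma n > 0" using n by simp
  have c0: "c \<ge> 0" unfolding c_def using G by simp
  have N2: "N \<ge> 2" unfolding N_def using n by simp
  have nu0: "\<nu> > 0" unfolding \<nu>_def using n by simp
  have E0: "E \<ge> 0" unfolding E_def using G n by (auto intro!: divide_nonneg_pos)
  have um[measurable]: "u \<in> borel_measurable (lebesgue_on {0..1})" using u by (rule inLp_meas)
  define F1 where "F1 y = indicator {0..t} y * (((t - y) powr (n - 1) * exp (\<mu> * (t - y)) / Gamma n) * u y)" for y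
  define F2 where "F2 y = exp (l*(t-y)) * u y" for y
  have hl: "integrable (lebesgue_on {0..1}) (\<lambda>y. exp (-l*y) * \<bar>u y\<bar>)"
    unfolding l_def by (rule holder_exp(1)[OF p lam u])
  have hn: "integrable (lebesgue_on {0..1}) (\<lambda>y. exp (-\<nu>*y) * \<bar>u y\<bar>)"
    by (rule holder_exp(1)[OF p nu0 u])
  have F1m: "F1 \<in> borel_measurable (lebesgue_on {0..1})"
    unfolding F1_def by (rule Vk_integrand_meas[OF um])
  have F2m: "F2 \<in> borel_measurable (lebesgue_on {0..1})"
    unfolding F2_def by measurable
  have F1i: "integrable (lebesgue_on {0..1}) F1"
  proof (rule Bochner_Integration.integrable_bound[OF _ F1m])
    show "integrable (lebesgue_on {0..1}) (\<lambda>y. (c * exp (l*t)) * (exp (-l*y) * \<bar>u y\<bar>))"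
      using hl by simp
    show "AE y in lebesgue_on {0..1}. norm (F1 y) \<le> norm ((c * exp (l*t)) * (exp (-l*y) * \<bar>u y\<bar>))"
    proof (rule AE_I2)
      fix y assume "y \<in> space (lebesgue_on {0..1::real})"
      then have y: "y \<in> {0..1}" by simp
      have "\<bar>F1 y\<bar> \<le> (c * exp (l*t)) * (exp (-l*y) * \<bar>u y\<bar>)"
        using Vk_integrand_le[OF n1 y, of t \<mu> u] unfolding F1_def c_def l_def by simp
      also have "\<dots> \<le> \<bar>(c * exp (l*t)) * (exp (-l*y) * \<bar>u y\<bar>)\<bar>" by simp
      finally show "norm (F1 y) \<le> norm ((c * exp (l*t)) * (exp (-l*y) * \<bar>u y\<bar>))" by simp
    qed
  qed
  have F2i: "integrable (lebesgue_on {0..1}) F2"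
  proof (rule Bochner_Integration.integrable_bound[OF _ F2m])
    show "integrable (lebesgue_on {0..1}) (\<lambda>y. exp (l*t) * (exp (-l*y) * \<bar>u y\<bar>))"
      using hl by simp
    show "AE y in lebesgue_on {0..1}. norm (F2 y) \<le> norm (exp (l*t) * (exp (-l*y) * \<bar>u y\<bar>))"
    proof (rule AE_I2)
      fix y
      have "exp (l*(t-y)) = exp (l*t) * exp (-l*y)"
      proof -
        have "l*(t-y) = l*t + -l*y" by (simp add: algebra_simps)
        then show ?thesis by (simp only: exp_add[symmetric])
      qed
      then show "norm (F2 y) \<le> norm (exp (l*t) * (exp (-l*y) * \<bar>u y\<bar>))"
        unfolding F2_def by (simp add: abs_mult)
    qed
  qed
  have eq: "Vk \<mu> n u t - c * Sop l u t = integral\<^sup>L (lebesgue_on {0..1}) (\<lambda>y. F1 y - c * F2 y)"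
  proof -
    have "Vk \<mu> n u t = integral\<^sup>L (lebesgue_on {0..1}) F1"
      unfolding F1_def by (rule Vk_eq[OF t])
    moreover have "Sop l u t = integral\<^sup>L (lebesgue_on {0..1}) F2"
      unfolding F2_def by (rule Sop_eq)
    ultimately show ?thesis using F1i F2i by simp
  qed
  have pt: "\<bar>F1 y - c * F2 y\<bar> \<le> (E * exp (\<nu>*t)) * (exp (-\<nu>*y) * \<bar>u y\<bar>)" if y: "y \<in> {0..1}" for y
  proof -
    define x where "x = t - y"
    have x1: "x \<le> 1" "-1 \<le> x" using t y unfolding x_def by auto
    have ind: "indicator {0..t} y = (if x \<ge> 0 then 1 else (0::real))"
      using y unfolding x_def by (auto simp: indicator_def)
    have cF2: "c * exp (l*(t-y)) = exp (\<mu>*x) / Gamma n * exp (N*(x-1))"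
    proof -
      have "-(n-1) + l*(t-y) = \<mu>*x + N*(x-1)" unfolding l_def N_def x_def by (simp add: algebra_simps)
      then have "exp (-(n-1)) * exp (l*(t-y)) = exp (\<mu>*x) * exp (N*(x-1))"
        by (simp only: exp_add[symmetric])
      then show ?thesis unfolding c_def by simp
    qed
    have cF2': "c * F2 y = exp (\<mu>*x) / Gamma n * exp (N*(x-1)) * u y"
      unfolding F2_def by (simp only: mult.assoc[symmetric] cF2)
    have F1': "F1 y = (if x \<ge> 0 then x powr N else 0) * (exp (\<mu>*x) / Gamma n) * u y"
      unfolding F1_def ind N_def x_def by simp
    have "F1 y - c * F2 y = exp (\<mu>*x) / Gamma n * ((if x \<ge> 0 then x powr N else 0) - exp (N*(x-1))) * u y"
      unfolding cF2' F1' by (simp add: algebra_simps)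
    then have "\<bar>F1 y - c * F2 y\<bar> = exp (\<mu>*x) / Gamma n * \<bar>(if x \<ge> 0 then x powr N else 0) - exp (N*(x-1))\<bar> * \<bar>u y\<bar>"
      using G by (simp add: abs_mult)
    also have "\<dots> \<le> exp \<bar>\<mu>\<bar> / Gamma n * ((32/N) * exp ((N/2)*(x-1))) * \<bar>u y\<bar>"
    proof (intro mult_right_mono mult_mono)
      have "\<bar>\<mu>\<bar> * \<bar>x\<bar> \<le> \<bar>\<mu>\<bar> * 1" using x1 by (intro mult_left_mono) auto
      then have "\<bar>\<mu>*x\<bar> \<le> \<bar>\<mu>\<bar>" by (simp add: abs_mult)
      then have "\<mu>*x \<le> \<bar>\<mu>\<bar>" using abs_ge_self[of "\<mu>*x"] by linarith
      then show "exp (\<mu>*x) / Gamma n \<le> exp \<bar>\<mu>\<bar> / Gamma n" using G by (simp add: divide_right_mono)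
      show "\<bar>(if x \<ge> 0 then x powr N else 0) - exp (N*(x-1))\<bar> \<le> (32/N) * exp ((N/2)*(x-1))"
        by (rule Dkernel_le[OF N2 x1(1)])
    qed (use G N2 in auto)
    also have "\<dots> = (E * exp (\<nu>*t)) * (exp (-\<nu>*y) * \<bar>u y\<bar>)"
    proof -
      have Nn: "N/2 = \<nu>" unfolding N_def \<nu>_def by simp
      have "(N/2)*(x-1) = -\<nu> + (\<nu>*t + -\<nu>*y)" unfolding Nn x_def by (simp add: algebra_simps)
      then have "exp ((N/2)*(x-1)) = exp (-\<nu>) * (exp (\<nu>*t) * exp (-\<nu>*y))"
        by (simp only: exp_add[symmetric])
      then show ?thesis unfolding E_def N_def \<nu>_def by (simp add: field_simps)
    qed
    finally show ?thesis .
  qed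
  have "\<bar>integral\<^sup>L (lebesgue_on {0..1}) (\<lambda>y. F1 y - c * F2 y)\<bar> \<le> integral\<^sup>L (lebesgue_on {0..1}) (\<lambda>y. \<bar>F1 y - c * F2 y\<bar>)"
    by (rule abs_integral_le)
  also have "\<dots> \<le> integral\<^sup>L (lebesgue_on {0..1}) (\<lambda>y. (E * exp (\<nu>*t)) * (exp (-\<nu>*y) * \<bar>u y\<bar>))"
    by (rule integral_mono') (use hn pt E0 in auto)
  also have "\<dots> = E * exp (\<nu>*t) * integral\<^sup>L (lebesgue_on {0..1}) (\<lambda>y. exp (-\<nu>*y) * \<bar>u y\<bar>)"
    by simp
  finally have fin: "\<bar>integral\<^sup>L (lebesgue_on {0..1}) (\<lambda>y. F1 y - c * F2 y)\<bar> \<le> E * exp (\<nu>*t) * integral\<^sup>L (lebesgue_on {0..1}) (\<lambda>y. exp (-\<nu>*y) * \<bar>u y\<bar>)" .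
  have "\<bar>Vk \<mu> n u t - c * Sop l u t\<bar> \<le> E * exp (\<nu>*t) * integral\<^sup>L (lebesgue_on {0..1}) (\<lambda>y. exp (-\<nu>*y) * \<bar>u y\<bar>)"
    unfolding eq by (rule fin)
  then show ?thesis unfolding E_def \<nu>_def c_def l_def .
qed

lemma Vk_meas:
  fixes u :: "real \<Rightarrow> real" and \<mu> n :: real
  assumes um[measurable]: "u \<in> borel_measurable borel"
  shows "Vk \<mu> n u \<in> borel_measurable (lebesgue_on {0..1})"
proof -
  define H where "H t y = indicator {0..t} y * (((t - y) powr (n - 1) * exp (\<mu> * (t - y)) / Gamma n) * u y)" for t y :: real
  have Hm: "(\<lambda>(t, y). H t y) \<in> borel_measurable (borel \<Otimes>\<^sub>M lborel)"
  proof -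
    have "Measurable.pred (borel \<Otimes>\<^sub>M lborel) (\<lambda>(t, y). y \<in> {0..t::real})"
      by (simp add: split_beta) measurable
    then show ?thesis unfolding H_def indicator_def by (simp add: split_beta) measurable
  qed
  have eq: "Vk \<mu> n u t = integral\<^sup>L lborel (H t)" for t
  proof -
    have "Vk \<mu> n u t = integral\<^sup>L lebesgue (H t)"
      unfolding Vk_def set_lebesgue_integral_def H_def by simp
    also have "\<dots> = integral\<^sup>L lborel (H t)"
      by (rule integral_completion) (use Hm in \<open>measurable\<close>)
    finally show ?thesis .
  qed
  have "(\<lambda>t. integral\<^sup>L lborel (H t)) \<in> borel_measurable borel"
    using Hm by (rule lborel.borel_measurable_lebesgue_integral)
  then have "Vk \<mu> n u \<in> borel_measurable borel" unfolding eq[abs_def] .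
  then show ?thesis by (intro measurable_restrict_space1 measurable_completion) simp
qed


lemma int_sub:
  fixes g :: "real \<Rightarrow> real"
  assumes "0 \<le> a" "b \<le> 1"
  shows "integral\<^sup>L (lebesgue_on {0..1}) (\<lambda>y. indicator {a..b} y * g y) = integral\<^sup>L (lebesgue_on {a..b}) g"
proof -
  have "integral\<^sup>L (lebesgue_on {0..1}) (\<lambda>y. indicator {a..b} y * g y) =
      integral\<^sup>L lebesgue (\<lambda>y. indicator {0..1} y *\<^sub>R (indicator {a..b} y * g y))"
    by (rule integral_restrict_space) simp
  also have "\<dots> = integral\<^sup>L lebesgue (\<lambda>y. indicator {a..b} y *\<^sub>R g y)"
    using assms by (intro Bochner_Integration.integral_cong) (auto simp: indicator_def)
  also have "\<dots> = integral\<^sup>L (lebesgue_on {a..b}) g"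
    by (rule integral_restrict_space[symmetric]) simp
  finally show ?thesis .
qed

lemma integrable_ind_cont:
  fixes g :: "real \<Rightarrow> real"
  assumes "continuous_on {0..1} g"
  shows "integrable (lebesgue_on {0..1}) (\<lambda>y. indicator {a..b} y * g y)"
proof (rule Bochner_Integration.integrable_bound)
  show "integrable (lebesgue_on {0..1}) g" using assms by (rule continuous_imp_integrable_real)
  have gm: "g \<in> borel_measurable (lebesgue_on {0..1})"
    using assms by (rule continuous_imp_measurable_on_sets_lebesgue) simp
  show "(\<lambda>y. indicator {a..b} y * g y) \<in> borel_measurable (lebesgue_on {0..1})"
    using gm by measurable
  show "AE x in lebesgue_on {0..1}. norm (indicator {a..b} x * g x) \<le> norm (g x)"
    by (rule AE_I2) (auto simp: indicator_def)
qed

lemma lint_exp_shift: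
  fixes a b c d :: real
  assumes "a \<le> b" "c \<noteq> 0"
  shows "integral\<^sup>L (lebesgue_on {a..b}) (\<lambda>t. exp (c*(t-d))) = (exp (c*(b-d)) - exp (c*(a-d)))/c"
proof -
  have "integral\<^sup>L (lebesgue_on {a..b}) (\<lambda>t. exp (c*(t-d))) = exp (c*(b-d))/c - exp (c*(a-d))/c"
    using assms(1) by (intro lint_FTC[where F="\<lambda>x. exp (c*(x-d))/c"])
      (auto intro!: continuous_intros derivative_eq_intros simp: assms(2))
  then show ?thesis by (simp add: diff_divide_distrib[symmetric])
qed

lemma kernel_lower:
  fixes n x \<mu> \<delta> :: real
  assumes d: "0 < \<delta>" "\<delta> \<le> 1/4" and n: "n \<ge> 1" and x: "1 - 2*\<delta> \<le> x" "x \<le> 1"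
  shows "exp (((n-1)/(1-2*\<delta>))*(x-1)) * exp (\<mu> - 2*\<delta>*\<bar>\<mu>\<bar>) \<le> x powr (n-1) * exp (\<mu>*x)"
proof -
  have x0: "x > 0" using d x by simp
  have dd: "1 - 2*\<delta> > 0" using d by simp
  have l1: "ln x \<ge> (x-1)/x"
  proof -
    have "ln (1/x) \<le> 1/x - 1" using x0 by (intro ln_le_minus_one) simp
    then show ?thesis using x0 by (simp add: ln_div field_simps)
  qed
  have l2: "(x-1)/x \<ge> (x-1)/(1-2*\<delta>)"
  proof -
    have "(1-x)/x \<le> (1-x)/(1-2*\<delta>)" using x dd by (intro divide_left_mono) auto
    moreover have "(x-1)/x = -((1-x)/x)" "(x-1)/(1-2*\<delta>) = -((1-x)/(1-2*\<delta>))" by (simp_all add: minus_divide_left)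
    ultimately show ?thesis by linarith
  qed
  have "((n-1)/(1-2*\<delta>))*(x-1) = (n-1) * ((x-1)/(1-2*\<delta>))" by simp
  also have "\<dots> \<le> (n-1) * ln x" using l1 l2 n by (intro mult_left_mono) auto
  finally have e1: "exp (((n-1)/(1-2*\<delta>))*(x-1)) \<le> x powr (n-1)"
    using x0 by (simp add: powr_def mult.commute)
  have "\<bar>\<mu>*(x-1)\<bar> \<le> \<bar>\<mu>\<bar> * (2*\<delta>)"
    using x d by (simp add: abs_mult) (intro mult_left_mono, auto)
  then have "\<mu> - 2*\<delta>*\<bar>\<mu>\<bar> \<le> \<mu>*x" by (simp add: abs_le_iff algebra_simps)
  then have e2: "exp (\<mu> - 2*\<delta>*\<bar>\<mu>\<bar>) \<le> exp (\<mu>*x)" by simp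
  show ?thesis using e1 e2 by (intro mult_mono) auto
qed


lemma Vk_lower:
  fixes n \<mu> \<delta> a c0 t :: real
  assumes d: "0 < \<delta>" "\<delta> \<le> 1/4" and n: "n \<ge> 2" and a: "a \<ge> 0" and c0: "c0 \<ge> 0"
    and t: "t \<in> {1-\<delta>..1}"
  shows "c0 * (exp (\<mu> - 2*\<delta>*\<bar>\<mu>\<bar>) / Gamma n) * exp (((n-1)/(1-2*\<delta>))*(t-1)) *
           ((1 - exp (-(((n-1)/(1-2*\<delta>))+a)*\<delta>)) / (((n-1)/(1-2*\<delta>))+a))
         \<le> Vk \<mu> n (\<lambda>y. c0 * exp (-a*y)) t"
proof -
  define m where "m = (n-1)/(1-2*\<delta>)"
  define K where "K = exp (\<mu> - 2*\<delta>*\<bar>\<mu>\<bar>) / Gamma n"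
  define L where "L = c0 * K * exp (m*(t-1))"
  define u0 where "u0 y = c0 * exp (-a*y)" for y
  have n1: "n \<ge> 1" using n by simp
  have G: "Gamma n > 0" using n by simp
  have dd: "1 - 2*\<delta> > 0" using d by simp
  have m0: "m > 0" unfolding m_def using n dd by simp
  have ma: "m + a > 0" using m0 a by simp
  have t01: "t \<in> {0..1}" using t d by auto
  define F1 where "F1 y = indicator {0..t} y * (((t - y) powr (n - 1) * exp (\<mu> * (t - y)) / Gamma n) * u0 y)" for y
  have um: "u0 \<in> borel_measurable (lebesgue_on {0..1})" unfolding u0_def by measurable
  have F1m: "F1 \<in> borel_measurable (lebesgue_on {0..1})"
    unfolding F1_def by (rule Vk_integrand_meas[OF um])
  have F1i: "integrable (lebesgue_on {0..1}) F1"
  proof (rule Bochner_Integration.integrable_bound[OF _ F1m])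
    show "integrable (lebesgue_on {0..1}) (\<lambda>y. (exp (-(n-1)) / Gamma n * exp ((n-1+\<mu>)*t)) * (exp (-(n-1+\<mu>)*y) * \<bar>u0 y\<bar>))"
      unfolding u0_def by (intro continuous_imp_integrable_real continuous_intros)
    show "AE y in lebesgue_on {0..1}. norm (F1 y) \<le> norm ((exp (-(n-1)) / Gamma n * exp ((n-1+\<mu>)*t)) * (exp (-(n-1+\<mu>)*y) * \<bar>u0 y\<bar>))"
    proof (rule AE_I2)
      fix y assume "y \<in> space (lebesgue_on {0..1::real})"
      then have y: "y \<in> {0..1}" by simp
      have "\<bar>F1 y\<bar> \<le> (exp (-(n-1)) / Gamma n * exp ((n-1+\<mu>)*t)) * (exp (-(n-1+\<mu>)*y) * \<bar>u0 y\<bar>)"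
        unfolding F1_def by (rule Vk_integrand_le[OF n1 y])
      then show "norm (F1 y) \<le> norm ((exp (-(n-1)) / Gamma n * exp ((n-1+\<mu>)*t)) * (exp (-(n-1+\<mu>)*y) * \<bar>u0 y\<bar>))"
        using G by simp
    qed
  qed
  have gi: "integrable (lebesgue_on {0..1}) (\<lambda>y. indicator {0..\<delta>} y * (L * exp (-(m+a)*y)))"
    by (intro integrable_ind_cont continuous_intros)
  have "integral\<^sup>L (lebesgue_on {0..1}) (\<lambda>y. indicator {0..\<delta>} y * (L * exp (-(m+a)*y)))
      = integral\<^sup>L (lebesgue_on {0..\<delta>}) (\<lambda>y. L * exp (-(m+a)*y))"
    using d by (intro int_sub) auto
  also have "\<dots> = L * ((exp (-(m+a)*\<delta>) - exp (-(m+a)*0)) / (-(m+a)))"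
    using lint_exp[of 0 \<delta> "-(m+a)"] d ma by simp
  also have "\<dots> = L * ((1 - exp (-(m+a)*\<delta>)) / (m+a))"
    using ma by (simp add: field_simps)
  finally have I: "integral\<^sup>L (lebesgue_on {0..1}) (\<lambda>y. indicator {0..\<delta>} y * (L * exp (-(m+a)*y)))
      = L * ((1 - exp (-(m+a)*\<delta>)) / (m+a))" .
  have "integral\<^sup>L (lebesgue_on {0..1}) (\<lambda>y. indicator {0..\<delta>} y * (L * exp (-(m+a)*y))) \<le> integral\<^sup>L (lebesgue_on {0..1}) F1"
  proof (rule integral_mono[OF gi F1i])
    fix y assume "y \<in> space (lebesgue_on {0..1::real})"
    then have y: "y \<in> {0..1}" by simp
    show "indicator {0..\<delta>} y * (L * exp (-(m+a)*y)) \<le> F1 y"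
    proof (cases "y \<in> {0..\<delta>}")
      case False
      have "0 \<le> F1 y" unfolding F1_def u0_def using G c0 by (auto intro!: mult_nonneg_nonneg divide_nonneg_pos)
      then show ?thesis using False by simp
    next
      case True
      then have yt: "y \<in> {0..t}" using t d by auto
      have x: "1 - 2*\<delta> \<le> t - y" "t - y \<le> 1" using True t by auto
      have kl: "exp (m*((t-y)-1)) * exp (\<mu> - 2*\<delta>*\<bar>\<mu>\<bar>) \<le> (t-y) powr (n-1) * exp (\<mu>*(t-y))"
        unfolding m_def by (rule kernel_lower[OF d n1 x])
      have ex: "exp (m*((t-y)-1)) = exp (m*(t-1)) * exp (-m*y)"
      proof -
        have "m*((t-y)-1) = m*(t-1) + -m*y" by (simp add: algebra_simps)
        then show ?thesis by (simp only: exp_add[symmetric])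
      qed
      have ex2: "exp (-(m+a)*y) = exp (-m*y) * exp (-a*y)"
      proof -
        have "-(m+a)*y = -m*y + -a*y" by (simp add: algebra_simps)
        then show ?thesis by (simp only: exp_add[symmetric])
      qed
      have "indicator {0..\<delta>} y * (L * exp (-(m+a)*y)) = (exp (m*((t-y)-1)) * exp (\<mu> - 2*\<delta>*\<bar>\<mu>\<bar>)) / Gamma n * u0 y"
        using True unfolding L_def K_def u0_def ex ex2 by simp
      also have "\<dots> \<le> ((t-y) powr (n-1) * exp (\<mu>*(t-y))) / Gamma n * u0 y"
        using kl G c0 unfolding u0_def by (intro mult_right_mono divide_right_mono) auto
      also have "\<dots> = F1 y" unfolding F1_def using yt by simp
      finally show ?thesis .
    qed
  qed
  also have "integral\<^sup>L (lebesgue_on {0..1}) F1 = Vk \<mu> n (\<lambda>y. c0 * exp (-a*y)) t"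
    unfolding F1_def u0_def by (rule Vk_eq[OF t01, symmetric])
  finally have X: "integral\<^sup>L (lebesgue_on {0..1}) (\<lambda>y. indicator {0..\<delta>} y * (L * exp (-(m+a)*y))) \<le> Vk \<mu> n (\<lambda>y. c0 * exp (-a*y)) t" .
  have "L * ((1 - exp (-(m+a)*\<delta>)) / (m+a)) \<le> Vk \<mu> n (\<lambda>y. c0 * exp (-a*y)) t"
    using X unfolding I .
  then show ?thesis unfolding L_def K_def m_def[symmetric] by (simp add: mult.assoc)
qed

lemma Vk_nonneg:
  fixes n \<mu> a c0 t :: real
  assumes n: "n \<ge> 1" and c0: "c0 \<ge> 0" and t: "t \<in> {0..1}"
  shows "0 \<le> Vk \<mu> n (\<lambda>y. c0 * exp (-a*y)) t"
proof -
  have G: "Gamma n > 0" using n by simp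
  show ?thesis unfolding Vk_eq[OF t]
    using G c0 by (intro integral_nonneg_AE AE_I2) (auto intro!: mult_nonneg_nonneg divide_nonneg_pos)
qed

lemma Vk_ub:
  assumes p: "1 \<le> p" and n: "n \<ge> 1" and lam: "n - 1 + \<mu> > 0"
  shows "\<And>u. inLp p u \<Longrightarrow> lpnorm p u \<le> 1 \<Longrightarrow>
    lpnorm p (Vk \<mu> n u) \<le> (exp (-(n-1)) / Gamma n) * (Aexp p (n-1+\<mu>) * Bexp p (n-1+\<mu>))"
proof -
  have E0: "0 \<le> exp (-(n-1)) / Gamma n" using n by simp
  note R = rank1_bound[where T="Vk \<mu> n" and E="exp (-(n-1)) / Gamma n" and \<nu>="n-1+\<mu>", OF p lam E0]
  fix u assume "inLp p u" "lpnorm p u \<le> 1"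
  then show "lpnorm p (Vk \<mu> n u) \<le> (exp (-(n-1)) / Gamma n) * (Aexp p (n-1+\<mu>) * Bexp p (n-1+\<mu>))"
    using R Vk_bound[OF p n lam] by blast
qed

lemma D_ub:
  assumes p: "1 \<le> p" and n: "n \<ge> 3" and lam: "n - 1 + \<mu> > 0"
  shows "\<And>u. inLp p u \<Longrightarrow> lpnorm p u \<le> 1 \<Longrightarrow>
    lpnorm p ((\<lambda>u t. Vk \<mu> n u t - (exp (-(n - 1)) / Gamma n) * Sop (n - 1 + \<mu>) u t) u) \<le>
      (32 * exp \<bar>\<mu>\<bar> * exp (-((n-1)/2)) / ((n-1) * Gamma n)) * (Aexp p ((n-1)/2) * Bexp p ((n-1)/2))"
proof -
  have nu: "(n-1)/2 > 0" using n by simp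
  have E0: "0 \<le> 32 * exp \<bar>\<mu>\<bar> * exp (-((n-1)/2)) / ((n-1) * Gamma n)" using n by (auto intro!: divide_nonneg_pos)
  note R = rank1_bound[where T="\<lambda>u t. Vk \<mu> n u t - (exp (-(n - 1)) / Gamma n) * Sop (n - 1 + \<mu>) u t"
      and E="32 * exp \<bar>\<mu>\<bar> * exp (-((n-1)/2)) / ((n-1) * Gamma n)" and \<nu>="(n-1)/2", OF p nu E0]
  fix u assume "inLp p u" "lpnorm p u \<le> 1"
  then show "lpnorm p ((\<lambda>u t. Vk \<mu> n u t - (exp (-(n - 1)) / Gamma n) * Sop (n - 1 + \<mu>) u t) u) \<le>
      (32 * exp \<bar>\<mu>\<bar> * exp (-((n-1)/2)) / ((n-1) * Gamma n)) * (Aexp p ((n-1)/2) * Bexp p ((n-1)/2))"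
    using R D_bound[OF p n lam] by blast
qed


lemma abs_powr_exp_meas[measurable]:
  fixes r :: real
  assumes "f \<in> borel_measurable (lebesgue_on {0..1::real})"
  shows "(\<lambda>t. \<bar>f t\<bar> powr r) \<in> borel_measurable (lebesgue_on {0..1})"
  using assms by measurable

lemma LB_fin:
  fixes r \<delta> n \<mu> a :: real
  assumes p: "p = ereal r" "r \<ge> 1" and d: "0 < \<delta>" "\<delta> \<le> 1/4" and n: "n \<ge> 2"
    and lam: "n - 1 + \<mu> > 0" and a: "a > 0"
  defines "m \<equiv> (n-1)/(1-2*\<delta>)"
  shows "(1 / ((1 - exp (-a*r))/(a*r)) powr (1/r)) * (exp (\<mu> - 2*\<delta>*\<bar>\<mu>\<bar>) / Gamma n) *
      ((1 - exp (-(m+a)*\<delta>)) / (m+a)) * ((1 - exp (-(r*m)*\<delta>))/(r*m)) powr (1/r)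
    \<le> opnorm p (Vk \<mu> n)"
proof -
  have p1: "1 \<le> p" using p by simp
  have r0: "r > 0" using p by simp
  have n1: "n \<ge> 1" using n by simp
  have G: "Gamma n > 0" using n by simp
  have dd: "1 - 2*\<delta> > 0" using d by simp
  have m0: "m > 0" unfolding m_def using n dd by simp
  define Y where "Y = (1 - exp (-a*r))/(a*r)"
  have Y0: "Y > 0" unfolding Y_def using a r0 by (auto intro!: divide_pos_pos)
  define c0 where "c0 = 1 / Y powr (1/r)"
  have c0p: "c0 > 0" unfolding c0_def using Y0 by simp
  define u0 where "u0 y = c0 * exp (-a*y)" for y
  have u0r: "(\<lambda>y. \<bar>u0 y\<bar> powr r) = (\<lambda>y. c0 powr r * exp ((-a*r)*y))"
    using c0p by (auto simp: u0_def powr_mult exp_powr_real mult_ac)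
  have u0m: "u0 \<in> borel_measurable (lebesgue_on {0..1})" unfolding u0_def by measurable
  have u0i: "integrable (lebesgue_on {0..1}) (\<lambda>y. \<bar>u0 y\<bar> powr r)"
    unfolding u0r by (intro continuous_imp_integrable_real continuous_intros)
  have u0in: "inLp p u0"
    unfolding inLp_def using p u0m u0i by simp
  have "lpnorm p u0 = (integral\<^sup>L (lebesgue_on {0..1}) (\<lambda>y. \<bar>u0 y\<bar> powr r)) powr (1/r)"
    using p by (simp add: lpnorm_def)
  also have "\<dots> = (integral\<^sup>L (lebesgue_on {0..1}) (\<lambda>y. c0 powr r * exp ((-a*r)*y))) powr (1/r)"
    unfolding u0r ..
  also have "integral\<^sup>L (lebesgue_on {0..1}) (\<lambda>y. c0 powr r * exp ((-a*r)*y)) = c0 powr r * Y"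
  proof -
    have "integral\<^sup>L (lebesgue_on {0..1}) (\<lambda>y. c0 powr r * exp ((-a*r)*y)) =
        c0 powr r * integral\<^sup>L (lebesgue_on {0..1}) (\<lambda>y. exp ((-a*r)*y))" by simp
    also have "integral\<^sup>L (lebesgue_on {0..1}) (\<lambda>y. exp ((-a*r)*y)) = (exp (-a*r) - 1)/(-a*r)"
      using lint_exp01[of "-a*r"] a r0 by simp
    also have "(exp (-a*r) - 1)/(-a*r) = Y" unfolding Y_def using a r0 by (simp add: field_simps)
    finally show ?thesis .
  qed
  also have "(c0 powr r * Y) powr (1/r) = c0 * Y powr (1/r)"
    using c0p Y0 r0 by (simp add: powr_mult powr_powr)
  also have "\<dots> = 1" unfolding c0_def using Y0 by simp
  finally have u0n: "lpnorm p u0 \<le> 1" by simp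
  note UB = Vk_ub[OF p1 n1 lam]
  have "lpnorm p (Vk \<mu> n u0) \<le> opnorm p (Vk \<mu> n)"
    by (rule opnorm_ge[OF UB u0in u0n])
  define K where "K = exp (\<mu> - 2*\<delta>*\<bar>\<mu>\<bar>) / Gamma n"
  define W where "W = (1 - exp (-(m+a)*\<delta>)) / (m+a)"
  define C where "C = c0 * K * W"
  have "0 \<le> (m+a)*\<delta>" using m0 a d by simp
  then have "-(m+a)*\<delta> \<le> 0" by linarith
  then have "exp (-(m+a)*\<delta>) \<le> 1" by simp
  then have W0: "W \<ge> 0" unfolding W_def using m0 a by (auto intro!: divide_nonneg_pos)
  have C0: "C \<ge> 0" unfolding C_def K_def using c0p G W0 by (auto intro!: mult_nonneg_nonneg divide_nonneg_pos)
  have low: "C * exp (m*(t-1)) \<le> Vk \<mu> n u0 t" if t: "t \<in> {1-\<delta>..1}" for t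
    using Vk_lower[OF d n a[THEN less_imp_le] c0p[THEN less_imp_le] t, of \<mu>]
    unfolding C_def K_def W_def m_def u0_def by (simp add: mult_ac)
  have u0b: "u0 \<in> borel_measurable borel" unfolding u0_def by measurable
  have Vm: "Vk \<mu> n u0 \<in> borel_measurable (lebesgue_on {0..1})" by (rule Vk_meas[OF u0b])
  define Bd where "Bd = exp (-(n-1)) / Gamma n * exp (n-1+\<mu>) *
     integral\<^sup>L (lebesgue_on {0..1}) (\<lambda>y. exp (-(n-1+\<mu>)*y) * \<bar>u0 y\<bar>)"
  have Vbd: "\<bar>Vk \<mu> n u0 t\<bar> \<le> Bd" if t: "t \<in> {0..1}" for t
  proof -
    have "\<bar>Vk \<mu> n u0 t\<bar> \<le> exp (-(n-1)) / Gamma n * exp ((n-1+\<mu>)*t) *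
        integral\<^sup>L (lebesgue_on {0..1}) (\<lambda>y. exp (-(n-1+\<mu>)*y) * \<bar>u0 y\<bar>)"
      by (rule Vk_bound[OF p1 n1 lam u0in t])
    also have "\<dots> \<le> Bd" unfolding Bd_def using t lam G
      by (intro mult_right_mono mult_left_mono) (auto intro!: integral_nonneg_AE)
    finally show ?thesis .
  qed
  have Vi: "integrable (lebesgue_on {0..1}) (\<lambda>t. \<bar>Vk \<mu> n u0 t\<bar> powr r)"
  proof (rule Bochner_Integration.integrable_bound)
    show "integrable (lebesgue_on {0..1::real}) (\<lambda>t. Bd powr r)"
      by (intro continuous_imp_integrable_real continuous_intros)
    show "(\<lambda>t. \<bar>Vk \<mu> n u0 t\<bar> powr r) \<in> borel_measurable (lebesgue_on {0..1})"
      using Vm by measurable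
    show "AE t in lebesgue_on {0..1}. norm (\<bar>Vk \<mu> n u0 t\<bar> powr r) \<le> norm (Bd powr r)"
    proof (rule AE_I2)
      fix t assume "t \<in> space (lebesgue_on {0..1::real})"
      then have "\<bar>Vk \<mu> n u0 t\<bar> \<le> Bd" using Vbd by simp
      then show "norm (\<bar>Vk \<mu> n u0 t\<bar> powr r) \<le> norm (Bd powr r)" using r0
        by (simp add: powr_mono2)
    qed
  qed
  define g where "g t = indicator {1-\<delta>..1} t * (C powr r * exp ((r*m)*(t-1)))" for t
  have gi: "integrable (lebesgue_on {0..1}) g" unfolding g_def
    by (intro integrable_ind_cont continuous_intros)
  have "integral\<^sup>L (lebesgue_on {0..1}) g = integral\<^sup>L (lebesgue_on {1-\<delta>..1}) (\<lambda>t. C powr r * exp ((r*m)*(t-1)))"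
    unfolding g_def using d by (intro int_sub) auto
  also have "\<dots> = C powr r * ((exp ((r*m)*(1-1)) - exp ((r*m)*((1-\<delta>)-1)))/(r*m))"
    using lint_exp_shift[of "1-\<delta>" 1 "r*m" 1] d r0 m0 by simp
  also have "\<dots> = C powr r * ((1 - exp (-(r*m)*\<delta>))/(r*m))" by simp
  finally have gI: "integral\<^sup>L (lebesgue_on {0..1}) g = C powr r * ((1 - exp (-(r*m)*\<delta>))/(r*m))" .
  have "integral\<^sup>L (lebesgue_on {0..1}) g \<le> integral\<^sup>L (lebesgue_on {0..1}) (\<lambda>t. \<bar>Vk \<mu> n u0 t\<bar> powr r)"
  proof (rule integral_mono[OF gi Vi])
    fix t assume "t \<in> space (lebesgue_on {0..1::real})"
    show "g t \<le> \<bar>Vk \<mu> n u0 t\<bar> powr r"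
    proof (cases "t \<in> {1-\<delta>..1}")
      case True
      have "C powr r * exp ((r*m)*(t-1)) = (C * exp (m*(t-1))) powr r"
        using C0 by (simp add: powr_mult exp_powr_real mult_ac)
      also have "\<dots> \<le> \<bar>Vk \<mu> n u0 t\<bar> powr r"
        using low[OF True] C0 r0 by (intro powr_mono2) auto
      finally show ?thesis unfolding g_def using True by simp
    qed (simp add: g_def)
  qed
  define Z where "Z = (1 - exp (-(r*m)*\<delta>))/(r*m)"
  have "0 \<le> (r*m)*\<delta>" using r0 m0 d by simp
  then have "-(r*m)*\<delta> \<le> 0" by (simp only: mult_minus_left)
  then have "exp (-(r*m)*\<delta>) \<le> 1" by simp
  then have Z0: "Z \<ge> 0" unfolding Z_def using r0 m0 by (auto intro!: divide_nonneg_pos)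
  have lpV: "lpnorm p (Vk \<mu> n u0) = (integral\<^sup>L (lebesgue_on {0..1}) (\<lambda>t. \<bar>Vk \<mu> n u0 t\<bar> powr r)) powr (1/r)"
    using p by (simp add: lpnorm_def)
  have mono: "C powr r * Z \<le> integral\<^sup>L (lebesgue_on {0..1}) (\<lambda>t. \<bar>Vk \<mu> n u0 t\<bar> powr r)"
    using \<open>integral\<^sup>L (lebesgue_on {0..1}) g \<le> _\<close> unfolding gI Z_def .
  have "(C powr r * Z) powr (1/r) \<le> lpnorm p (Vk \<mu> n u0)"
    unfolding lpV using mono r0 C0 Z0 by (intro powr_mono2) auto
  moreover have "(C powr r * Z) powr (1/r) = C * Z powr (1/r)"
  proof -
    have "(C powr r * Z) powr (1/r) = (C powr r) powr (1/r) * Z powr (1/r)"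
      using C0 Z0 by (simp add: powr_mult)
    also have "(C powr r) powr (1/r) = C" using C0 r0 by (simp add: powr_powr)
    finally show ?thesis .
  qed
  ultimately have "C * Z powr (1/r) \<le> opnorm p (Vk \<mu> n)"
    using \<open>lpnorm p (Vk \<mu> n u0) \<le> opnorm p (Vk \<mu> n)\<close> by simp
  then show ?thesis unfolding C_def c0_def Y_def K_def W_def Z_def by (simp add: mult_ac)
qed


lemma esssup_ge:
  fixes f :: "real \<Rightarrow> real"
  assumes fm: "f \<in> borel_measurable (lebesgue_on {0..1})" and ab: "0 \<le> a" "a < b" "b \<le> 1"
    and fc: "\<And>t. t \<in> {a..b} \<Longrightarrow> c \<le> f t"
  shows "ereal c \<le> esssup (lebesgue_on {0..1}) (\<lambda>x. ereal (f x))"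
proof -
  have fm': "(\<lambda>x. ereal (f x)) \<in> borel_measurable (lebesgue_on {0..1})" using fm by measurable
  have Ssets: "{a..b} \<in> sets (lebesgue_on {0..1})"
    using ab by (simp add: sets_restrict_space_iff)
  have meas: "emeasure (lebesgue_on {0..1}) {a..b} = ennreal (b - a)"
    using ab by (subst emeasure_restrict_space) auto
  show ?thesis
    unfolding esssup_eq_AE[OF fm']
  proof (rule Inf_greatest, clarsimp)
    fix z assume ae: "AE x in lebesgue_on {0..1}. ereal (f x) \<le> z"
    show "ereal c \<le> z"
    proof (rule ccontr)
      assume "\<not> ereal c \<le> z"
      then have zc: "z < ereal c" by simp
      have "AE x in lebesgue_on {0..1}. x \<notin> {a..b}"
        using ae
      proof (rule eventually_mono)
        fix x assume "ereal (f x) \<le> z"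
        then show "x \<notin> {a..b}" using fc[of x] zc by (metis ereal_less_eq(3) leD order_le_less_trans)
      qed
      then have "{a..b} \<in> null_sets (lebesgue_on {0..1})" using Ssets by (simp add: AE_iff_null_sets)
      then have "emeasure (lebesgue_on {0..1}) {a..b} = 0" by auto
      then show False using meas ab by simp
    qed
  qed
qed


lemma LB_inf:
  fixes \<delta> n \<mu> :: real
  assumes p: "p = \<infinity>" and d: "0 < \<delta>" "\<delta> \<le> 1/4" and n: "n \<ge> 2"
    and lam: "n - 1 + \<mu> > 0"
  defines "m \<equiv> (n-1)/(1-2*\<delta>)"
  assumes m1: "m \<ge> 1"
  shows "(exp (\<mu> - 2*\<delta>*\<bar>\<mu>\<bar>) / Gamma n) * ((1 - exp (-m*\<delta>)) / m) * exp (-\<delta>) \<le> opnorm p (Vk \<mu> n)"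
proof -
  have p1: "1 \<le> p" using p by simp
  have n1: "n \<ge> 1" using n by simp
  have G: "Gamma n > 0" using n by simp
  have m0: "m > 0" using m1 by simp
  define u0 where "u0 y = 1 * exp (-0*y)" for y :: real
  have u0e: "u0 = (\<lambda>y. 1)" unfolding u0_def by simp
  have ess1: "esssup (lebesgue_on {0..1::real}) (\<lambda>x. ereal \<bar>1\<bar>) = 1"
    using esssup_const[OF emeasure_01_ne0, of "ereal 1"] by simp
  have u0in: "inLp p u0" unfolding inLp_def u0e using p ess1 by simp
  have u0n: "lpnorm p u0 \<le> 1" unfolding lpnorm_def u0e using p ess1 by simp
  note UB = Vk_ub[OF p1 n1 lam]
  have opn: "lpnorm p (Vk \<mu> n u0) \<le> opnorm p (Vk \<mu> n)"
    by (rule opnorm_ge[OF UB u0in u0n])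
  define K where "K = exp (\<mu> - 2*\<delta>*\<bar>\<mu>\<bar>) / Gamma n"
  define W where "W = (1 - exp (-m*\<delta>)) / m"
  have "0 \<le> m*\<delta>" using m0 d by simp
  then have "exp (-m*\<delta>) \<le> 1" by simp
  then have W0: "W \<ge> 0" unfolding W_def using m0 by (auto intro!: divide_nonneg_pos)
  have K0: "K \<ge> 0" unfolding K_def using G by simp
  define \<eta> where "\<eta> = \<delta> / m"
  have eta: "0 < \<eta>" "\<eta> \<le> \<delta>" unfolding \<eta>_def using d m1 m0 by (auto simp: field_simps)
  have low: "K * W * exp (-\<delta>) \<le> Vk \<mu> n u0 t" if t: "t \<in> {1-\<eta>..1}" for t
  proof -
    have t': "t \<in> {1-\<delta>..1}" using t eta by auto
    have "1 * K * exp (m*(t-1)) * W \<le> Vk \<mu> n u0 t"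
      using Vk_lower[OF d n order_refl zero_le_one t', of \<mu>]
      unfolding K_def W_def m_def u0_def by simp
    moreover have "exp (-\<delta>) \<le> exp (m*(t-1))"
    proof -
      have "m*(t-1) \<ge> m*(-\<eta>)" using t m0 by (intro mult_left_mono) auto
      also have "m*(-\<eta>) = -\<delta>" unfolding \<eta>_def using m0 by simp
      finally show ?thesis by simp
    qed
    then have "K * W * exp (-\<delta>) \<le> K * W * exp (m*(t-1))"
      using K0 W0 by (intro mult_left_mono) auto
    ultimately show ?thesis by (simp add: mult_ac)
  qed
  have u0b: "u0 \<in> borel_measurable borel" unfolding u0_def by measurable
  have Vm: "Vk \<mu> n u0 \<in> borel_measurable (lebesgue_on {0..1})" by (rule Vk_meas[OF u0b])
  have Vam: "(\<lambda>t. \<bar>Vk \<mu> n u0 t\<bar>) \<in> borel_measurable (lebesgue_on {0..1})" using Vm by measurable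
  have ge: "ereal (K * W * exp (-\<delta>)) \<le> esssup (lebesgue_on {0..1}) (\<lambda>x. ereal \<bar>Vk \<mu> n u0 x\<bar>)"
  proof (rule esssup_ge[OF Vam, of "1-\<eta>" 1])
    show "0 \<le> 1 - \<eta>" "1 - \<eta> < 1" using eta d by auto
    fix t assume t: "t \<in> {1-\<eta>..1}"
    show "K * W * exp (-\<delta>) \<le> \<bar>Vk \<mu> n u0 t\<bar>" using low[OF t] by simp
  qed simp
  define Bd where "Bd = exp (-(n-1)) / Gamma n * exp (n-1+\<mu>) *
     integral\<^sup>L (lebesgue_on {0..1}) (\<lambda>y. exp (-(n-1+\<mu>)*y) * \<bar>u0 y\<bar>)"
  have Vbd: "\<bar>Vk \<mu> n u0 t\<bar> \<le> Bd" if t: "t \<in> {0..1}" for t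
  proof -
    have "\<bar>Vk \<mu> n u0 t\<bar> \<le> exp (-(n-1)) / Gamma n * exp ((n-1+\<mu>)*t) *
        integral\<^sup>L (lebesgue_on {0..1}) (\<lambda>y. exp (-(n-1+\<mu>)*y) * \<bar>u0 y\<bar>)"
      by (rule Vk_bound[OF p1 n1 lam u0in t])
    also have "\<dots> \<le> Bd" unfolding Bd_def using t lam G
      by (intro mult_right_mono mult_left_mono) (auto intro!: integral_nonneg_AE)
    finally show ?thesis .
  qed
  have "esssup (lebesgue_on {0..1}) (\<lambda>x. ereal \<bar>Vk \<mu> n u0 x\<bar>) \<le> ereal Bd"
    by (rule esssup_I) (use Vam Vbd in \<open>auto intro!: AE_I2\<close>)
  then have "K * W * exp (-\<delta>) \<le> lpnorm p (Vk \<mu> n u0)"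
    using ge p unfolding lpnorm_def
    by (cases "esssup (lebesgue_on {0..1}) (\<lambda>x. ereal \<bar>Vk \<mu> n u0 x\<bar>)") auto
  then show ?thesis using opn unfolding K_def W_def by simp
qed

lemma lim_1mexp: "c > 0 \<Longrightarrow> ((\<lambda>x::real. 1 - exp (-c*x)) \<longlongrightarrow> 1) at_top"
  by real_asymp

lemma m_at_top: "k > 0 \<Longrightarrow> filterlim (\<lambda>n::real. k*(n-1)) at_top at_top"
proof -
  assume k: "k > 0"
  have "filterlim (\<lambda>n::real. n - 1) at_top at_top" by real_asymp
  then show ?thesis using k by (intro filterlim_tendsto_pos_mult_at_top[OF tendsto_const]) auto
qed

lemma exp_neg_lim:
  fixes c :: real and g :: "'a \<Rightarrow> real"
  assumes "c > 0" "filterlim g at_top F"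
  shows "((\<lambda>x. exp (-c * g x)) \<longlongrightarrow> 0) F"
proof -
  have "((\<lambda>y::real. exp (-c*y)) \<longlongrightarrow> 0) at_top" using assms(1) by real_asymp
  then show ?thesis using assms(2) by (rule filterlim_compose)
qed

lemma n_over_n1: "((\<lambda>n::real. n/(n-1)) \<longlongrightarrow> 1) at_top"
  by real_asymp

lemma n_over_lam: "((\<lambda>n::real. n/(n-1+\<mu>)) \<longlongrightarrow> 1) at_top"
  by real_asymp

lemma n_over_sq: "((\<lambda>n::real. n/((n-1)*((n-1)/2))) \<longlongrightarrow> 0) at_top"
  by real_asymp

lemma lam_at_top: "filterlim (\<lambda>n::real. n-1+\<mu>) at_top at_top"
  by real_asymp

lemma half_at_top: "filterlim (\<lambda>n::real. (n-1)/2) at_top at_top"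
  by real_asymp


lemma alg_r:
  fixes r m \<delta> :: real
  assumes r: "r > 1" and m: "m > 0" and d: "\<delta> > 0"
  defines "q \<equiv> r/(r-1)" and "a \<equiv> m/(r-1)"
  shows "(1 / ((1 - exp (-a*r))/(a*r)) powr (1/r)) * ((1 - exp (-(m+a)*\<delta>)) / (m+a)) *
      ((1 - exp (-(r*m)*\<delta>))/(r*m)) powr (1/r)
    = (1/(r powr (1/r) * q powr (1/q))) / m * ((1 - exp (-(q*\<delta>)*m)) *
      (1 - exp (-(r*\<delta>)*m)) powr (1/r) / (1 - exp (-q*m)) powr (1/r))"
proof -
  have r0: "r > 0" "r - 1 > 0" using r by auto
  have q0: "q > 0" unfolding q_def using r by simp
  have ar: "a*r = m*q" using r0 by (simp add: a_def q_def)
  have ma: "m + a = m*q" using r0 by (simp add: a_def q_def field_simps)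
  have iq: "1/r - 1 = -(1/q)" unfolding q_def using r0 by (simp add: field_simps)
  define A1 where "A1 = 1 - exp (-q*m)"
  define A2 where "A2 = 1 - exp (-(q*\<delta>)*m)"
  define A3 where "A3 = 1 - exp (-(r*\<delta>)*m)"
  have A1p: "A1 > 0" unfolding A1_def using q0 m by simp
  have A3p: "A3 \<ge> 0" unfolding A3_def using r0 m d by simp
  have f1: "(1 - exp (-a*r))/(a*r) = A1/(m*q)"
  proof -
    have "-a*r = -q*m" using ar by (simp add: mult_ac)
    then show ?thesis unfolding A1_def ar by simp
  qed
  have f2: "(1 - exp (-(m+a)*\<delta>)) / (m+a) = A2/(m*q)"
  proof -
    have "-(m+a)*\<delta> = -(q*\<delta>)*m" using ma by (simp add: mult_ac)
    then show ?thesis unfolding A2_def ma by simp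
  qed
  have f3: "(1 - exp (-(r*m)*\<delta>))/(r*m) = A3/(r*m)"
  proof -
    have "-(r*m)*\<delta> = -(r*\<delta>)*m" by (simp add: mult_ac)
    then show ?thesis unfolding A3_def by simp
  qed
  have mq: "m*q > 0" using m q0 by simp
  have rm: "r*m > 0" using m r0 by simp
  have P1: "(A1/(m*q)) powr (1/r) = A1 powr (1/r) / (m powr (1/r) * q powr (1/r))"
    using A1p m q0 by (simp add: powr_divide powr_mult)
  have P3: "(A3/(r*m)) powr (1/r) = A3 powr (1/r) / (r powr (1/r) * m powr (1/r))"
    using A3p m r0 by (simp add: powr_divide powr_mult)
  have qq: "q powr (1/r) / q = 1 / q powr (1/q)"
  proof -
    have e: "1/r + -1 = -(1/q)" using iq by simp
    have "q powr (1/r) / q = q powr (1/r) * q powr (-1)" using q0 by (simp add: powr_minus divide_inverse)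
    also have "\<dots> = q powr (1/r + -1)" by (rule powr_add[symmetric])
    also have "\<dots> = q powr (-(1/q))" by (simp only: e)
    also have "\<dots> = 1 / q powr (1/q)" using q0 by (simp add: powr_minus divide_inverse)
    finally show ?thesis .
  qed
  have mm: "m powr (1/r) > 0" "q powr (1/r) > 0" "r powr (1/r) > 0" "A1 powr (1/r) > 0"
    using m q0 r0 A1p by auto
  have "(1 / ((1 - exp (-a*r))/(a*r)) powr (1/r)) * ((1 - exp (-(m+a)*\<delta>)) / (m+a)) *
      ((1 - exp (-(r*m)*\<delta>))/(r*m)) powr (1/r)
      = (m powr (1/r) * q powr (1/r)) / A1 powr (1/r) * (A2 / (m*q)) * (A3 powr (1/r) / (r powr (1/r) * m powr (1/r)))"
    unfolding f1 f2 f3 P1 P3 by simp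
  also have "\<dots> = (q powr (1/r) / q) / (r powr (1/r) * m) * (A2 * A3 powr (1/r) / A1 powr (1/r))"
    using mm m q0 by (simp add: field_simps)
  also have "\<dots> = (1/(r powr (1/r) * q powr (1/q))) / m * (A2 * A3 powr (1/r) / A1 powr (1/r))"
    unfolding qq by simp
  finally show ?thesis unfolding A1_def A2_def A3_def .
qed

lemma Gamma_succ: "(n::real) > 0 \<Longrightarrow> Gamma (n+1) = n * Gamma n"
  by (rule Gamma_plus1) (use nonpos_Ints_nonpos in force)

lemma Cp_pos: "1 \<le> p \<Longrightarrow> Cp p > 0"
  unfolding Cp_def Let_def by (cases p) (auto intro!: divide_pos_pos mult_pos_pos)

lemma AB_lim:
  assumes p: "1 \<le> p"
  shows "((\<lambda>\<nu>. Aexp p \<nu> * Bexp p \<nu> * \<nu> * exp (-\<nu>)) \<longlongrightarrow> Cp p) at_top"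
  using p
proof (cases rule: p_cases)
  case 1
  have ev: "\<forall>\<^sub>F \<nu> in at_top. 1 - exp (-1*\<nu>) = Aexp p \<nu> * Bexp p \<nu> * \<nu> * exp (-\<nu>)"
    using eventually_gt_at_top[of "0::real"]
  proof (rule eventually_mono)
    fix \<nu> :: real assume "\<nu> > 0"
    then show "1 - exp (-1*\<nu>) = Aexp p \<nu> * Bexp p \<nu> * \<nu> * exp (-\<nu>)"
      using 1 by (simp add: Aexp_def Bexp_def field_simps exp_minus)
  qed
  have "Cp p = 1" using 1 by (simp add: Cp_def)
  then show ?thesis using Lim_transform_eventually[OF lim_1mexp[of 1] ev] by simp
next
  case (2 r)
  show ?thesis
  proof (cases "r = 1")
    case True
    have ev: "\<forall>\<^sub>F \<nu> in at_top. 1 - exp (-1*\<nu>) = Aexp p \<nu> * Bexp p \<nu> * \<nu> * exp (-\<nu>)"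
      using eventually_gt_at_top[of "0::real"]
    proof (rule eventually_mono)
      fix \<nu> :: real assume nu: "\<nu> > 0"
      have "0 \<le> (1 - exp (-\<nu>)) / \<nu>" using nu by (auto intro!: divide_nonneg_pos)
      then show "1 - exp (-1*\<nu>) = Aexp p \<nu> * Bexp p \<nu> * \<nu> * exp (-\<nu>)"
        using 2 True nu by (simp add: Aexp_def Bexp_def field_simps exp_minus one_ereal_def)
    qed
    have "Cp p = 1" using 2 True by (simp add: Cp_def one_ereal_def)
    then show ?thesis using Lim_transform_eventually[OF lim_1mexp[of 1] ev] by simp
  next
    case False
    then have r1: "r > 1" using 2 by simp
    define q where "q = r/(r-1)"
    have q1: "q > 1" unfolding q_def using r1 by (simp add: field_simps)
    have rq: "1/r + 1/q = 1" unfolding q_def using r1 by (simp add: field_simps)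
    define K where "K = r powr (1/r) * q powr (1/q)"
    have K0: "K > 0" unfolding K_def using r1 q1 by simp
    have CpK: "Cp p = 1 / K" using 2 r1 unfolding Cp_def K_def q_def by (auto simp: one_ereal_def Let_def)
    have ev: "\<forall>\<^sub>F \<nu> in at_top. (1 - exp (-r*\<nu>)) powr (1/r) * (1 - exp (-q*\<nu>)) powr (1/q) / K
        = Aexp p \<nu> * Bexp p \<nu> * \<nu> * exp (-\<nu>)"
      using eventually_gt_at_top[of "0::real"]
    proof (rule eventually_mono)
      fix \<nu> :: real assume nu: "\<nu> > 0"
      have a0: "0 \<le> 1 - exp (-r*\<nu>)" using nu r1 by simp
      have b0: "0 \<le> 1 - exp (-q*\<nu>)" using nu q1 by simp
      have A: "Aexp p \<nu> = exp \<nu> * ((1 - exp (-r*\<nu>)) powr (1/r) / (r powr (1/r) * \<nu> powr (1/r)))"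
        using 2 r1 nu a0 by (simp add: Aexp_def powr_divide powr_mult)
      have B: "Bexp p \<nu> = (1 - exp (-q*\<nu>)) powr (1/q) / (q powr (1/q) * \<nu> powr (1/q))"
      proof -
        have B0: "Bexp p \<nu> = ((1 - exp (-q*\<nu>))/(q*\<nu>)) powr (1/q)"
          using 2 r1 by (simp add: Bexp_def Let_def q_def one_ereal_def)
        show ?thesis unfolding B0 using b0 q1 nu by (simp add: powr_divide powr_mult)
      qed
      have nn: "\<nu> powr (1/r) * \<nu> powr (1/q) = \<nu>"
        using nu rq by (simp add: powr_add[symmetric])
      have "Aexp p \<nu> * Bexp p \<nu> * \<nu> * exp (-\<nu>) =
          (1 - exp (-r*\<nu>)) powr (1/r) * (1 - exp (-q*\<nu>)) powr (1/q) / K * (\<nu> / (\<nu> powr (1/r) * \<nu> powr (1/q))) * (exp \<nu> * exp (-\<nu>))"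
        unfolding A B K_def by (simp add: field_simps)
      also have "\<dots> = (1 - exp (-r*\<nu>)) powr (1/r) * (1 - exp (-q*\<nu>)) powr (1/q) / K"
        using nn nu by (simp add: exp_minus)
      finally show "(1 - exp (-r*\<nu>)) powr (1/r) * (1 - exp (-q*\<nu>)) powr (1/q) / K
          = Aexp p \<nu> * Bexp p \<nu> * \<nu> * exp (-\<nu>)" by simp
    qed
    have lim: "((\<lambda>\<nu>. (1 - exp (-r*\<nu>)) powr (1/r) * (1 - exp (-q*\<nu>)) powr (1/q) / K) \<longlongrightarrow> 1 powr (1/r) * 1 powr (1/q) / K) at_top"
      using r1 q1 K0 by (intro tendsto_intros lim_1mexp) auto
    show ?thesis using Lim_transform_eventually[OF lim ev] CpK by simp
  qed
qed


lemma upper_part: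
  assumes p: "1 \<le> p"
  shows "\<forall>\<^sub>F n in at_top. opnorm p (Vk \<mu> n) / (Cp p * exp \<mu> / Gamma (n + 1)) \<le>
     (Aexp p (n-1+\<mu>) * Bexp p (n-1+\<mu>) * (n-1+\<mu>) * exp (-(n-1+\<mu>))) * (n/(n-1+\<mu>)) / Cp p"
    "((\<lambda>n. (Aexp p (n-1+\<mu>) * Bexp p (n-1+\<mu>) * (n-1+\<mu>) * exp (-(n-1+\<mu>))) * (n/(n-1+\<mu>)) / Cp p) \<longlongrightarrow> 1) at_top"
proof -
  have Cp0: "Cp p > 0" using Cp_pos[OF p] .
  have lim1: "((\<lambda>n. Aexp p (n-1+\<mu>) * Bexp p (n-1+\<mu>) * (n-1+\<mu>) * exp (-(n-1+\<mu>))) \<longlongrightarrow> Cp p) at_top"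
    using AB_lim[OF p] lam_at_top[of \<mu>] by (rule filterlim_compose)
  have "((\<lambda>n. (Aexp p (n-1+\<mu>) * Bexp p (n-1+\<mu>) * (n-1+\<mu>) * exp (-(n-1+\<mu>))) * (n/(n-1+\<mu>)) / Cp p) \<longlongrightarrow> Cp p * 1 / Cp p) at_top"
    using Cp0 by (intro tendsto_intros lim1 n_over_lam) auto
  then show "((\<lambda>n. (Aexp p (n-1+\<mu>) * Bexp p (n-1+\<mu>) * (n-1+\<mu>) * exp (-(n-1+\<mu>))) * (n/(n-1+\<mu>)) / Cp p) \<longlongrightarrow> 1) at_top"
    using Cp0 by simp
  show "\<forall>\<^sub>F n in at_top. opnorm p (Vk \<mu> n) / (Cp p * exp \<mu> / Gamma (n + 1)) \<le>
     (Aexp p (n-1+\<mu>) * Bexp p (n-1+\<mu>) * (n-1+\<mu>) * exp (-(n-1+\<mu>))) * (n/(n-1+\<mu>)) / Cp p"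
    using eventually_ge_at_top[of "max 1 (2 - \<mu>)"]
  proof (rule eventually_mono)
    fix n :: real assume "max 1 (2 - \<mu>) \<le> n"
    then have n1: "n \<ge> 1" and lam: "n - 1 + \<mu> > 0" by auto
    have G: "Gamma n > 0" using n1 by simp
    define l where "l = n - 1 + \<mu>"
    have l0: "l > 0" using lam unfolding l_def .
    have op: "opnorm p (Vk \<mu> n) \<le> (exp (-(n-1)) / Gamma n) * (Aexp p l * Bexp p l)"
      unfolding l_def by (rule opnorm_le) (rule Vk_ub[OF p n1 lam])
    have tau: "Cp p * exp \<mu> / Gamma (n + 1) = Cp p * exp \<mu> / (n * Gamma n)"
      using Gamma_succ[of n] n1 by simp
    have tpos: "Cp p * exp \<mu> / (n * Gamma n) > 0" using Cp0 G n1 by simp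
    have "opnorm p (Vk \<mu> n) / (Cp p * exp \<mu> / Gamma (n + 1)) \<le>
        ((exp (-(n-1)) / Gamma n) * (Aexp p l * Bexp p l)) / (Cp p * exp \<mu> / (n * Gamma n))"
      unfolding tau using op tpos by (intro divide_right_mono) auto
    also have "\<dots> = (Aexp p l * Bexp p l) * n * (exp (-(n-1)) / exp \<mu>) / Cp p"
    proof -
      have Gn: "Gamma n \<noteq> 0" using G by simp
      show ?thesis using Gn Cp0 n1 by (simp add: field_simps)
    qed
    also have "exp (-(n-1)) / exp \<mu> = exp (-l)" unfolding l_def by (simp add: exp_diff[symmetric] algebra_simps)
    also have "(Aexp p l * Bexp p l) * n * exp (-l) / Cp p = (Aexp p l * Bexp p l * l * exp (-l)) * (n/l) / Cp p"
      using l0 by (simp add: field_simps)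
    finally show "opnorm p (Vk \<mu> n) / (Cp p * exp \<mu> / Gamma (n + 1)) \<le>
     (Aexp p (n-1+\<mu>) * Bexp p (n-1+\<mu>) * (n-1+\<mu>) * exp (-(n-1+\<mu>))) * (n/(n-1+\<mu>)) / Cp p"
      unfolding l_def .
  qed
qed


lemma alg1:
  fixes a x1 e E G y2 y3 s m n :: real
  assumes "G \<noteq> 0" "e \<noteq> 0" "1 - x1 \<noteq> 0" "s \<noteq> 0" "m \<noteq> 0" "a \<noteq> 0" "n \<noteq> 0"
  shows "((1 / ((1 - x1)/a)) * (e * E / G) * (y2 / s) * (y3/m)) / (e / (n * G))
     = E * (n/m) * (a/s) * (y2*y3/(1-x1))"
  using assms by (simp add: field_simps)

lemma exp_neg_lim':
  fixes c :: real and g :: "'a \<Rightarrow> real"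
  assumes "c > 0" "filterlim g at_top F"
  shows "((\<lambda>x. exp (-(c * g x))) \<longlongrightarrow> 0) F"
  using exp_neg_lim[OF assms] by simp

lemma lower_inf:
  fixes \<delta> :: real
  assumes p: "p = \<infinity>" and d: "0 < \<delta>" "\<delta> \<le> 1/4"
  shows "\<exists>L. (L \<longlongrightarrow> exp (-2*\<delta>*\<bar>\<mu>\<bar>) * exp (-\<delta>) * (1-2*\<delta>)) at_top \<and>
     (\<forall>\<^sub>F n in at_top. L n \<le> opnorm p (Vk \<mu> n) / (Cp p * exp \<mu> / Gamma (n + 1)))"
proof -
  define k where "k = 1/(1-2*\<delta>)"
  have k0: "k > 0" unfolding k_def using d by simp
  have dd: "1 - 2*\<delta> > 0" using d by simp
  define L where "L n = exp (-2*\<delta>*\<bar>\<mu>\<bar>) * exp (-\<delta>) * ((1-2*\<delta>) * (n/(n-1))) * (1 - exp (-\<delta> * (k*(n-1))))" for n :: real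
  have "(L \<longlongrightarrow> exp (-2*\<delta>*\<bar>\<mu>\<bar>) * exp (-\<delta>) * ((1-2*\<delta>) * 1) * (1 - 0)) at_top"
    unfolding L_def using d k0
    by (intro tendsto_intros n_over_n1 exp_neg_lim[OF _ m_at_top]) auto
  then have lim: "(L \<longlongrightarrow> exp (-2*\<delta>*\<bar>\<mu>\<bar>) * exp (-\<delta>) * (1-2*\<delta>)) at_top" by simp
  have ev: "\<forall>\<^sub>F n in at_top. L n \<le> opnorm p (Vk \<mu> n) / (Cp p * exp \<mu> / Gamma (n + 1))"
    using eventually_ge_at_top[of "max 2 (2 - \<mu>)"]
  proof (rule eventually_mono)
    fix n :: real assume "max 2 (2 - \<mu>) \<le> n"
    then have n2: "n \<ge> 2" and lam: "n - 1 + \<mu> > 0" by auto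
    have G: "Gamma n > 0" using n2 by simp
    define m where "m = (n-1)/(1-2*\<delta>)"
    have mk: "m = k*(n-1)" unfolding m_def k_def by simp
    have m1: "m \<ge> 1" unfolding m_def using n2 dd d by (simp add: field_simps)
    have LB: "(exp (\<mu> - 2*\<delta>*\<bar>\<mu>\<bar>) / Gamma n) * ((1 - exp (-m*\<delta>)) / m) * exp (-\<delta>) \<le> opnorm p (Vk \<mu> n)"
      using LB_inf[OF p d n2 lam] m1 unfolding m_def by simp
    have Cp1: "Cp p = 1" using p by (simp add: Cp_def)
    have tau: "Cp p * exp \<mu> / Gamma (n + 1) = exp \<mu> / (n * Gamma n)"
      using Gamma_succ[of n] n2 Cp1 by simp
    have tpos: "exp \<mu> / (n * Gamma n) > 0" using G n2 by simp
    have "L n = ((exp (\<mu> - 2*\<delta>*\<bar>\<mu>\<bar>) / Gamma n) * ((1 - exp (-m*\<delta>)) / m) * exp (-\<delta>)) / (exp \<mu> / (n * Gamma n))"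
    proof -
      have Gn: "Gamma n \<noteq> 0" using G by simp
      have n1: "n - 1 \<noteq> 0" using n2 by simp
      have e: "exp (\<mu> - 2*\<delta>*\<bar>\<mu>\<bar>) = exp \<mu> * exp (-2*\<delta>*\<bar>\<mu>\<bar>)" by (simp add: exp_diff exp_minus field_simps)
      have e2: "exp (-m*\<delta>) = exp (-\<delta> * (k*(n-1)))" unfolding mk by (simp add: mult_ac)
      show ?thesis unfolding L_def e e2 using Gn n1 dd unfolding m_def by (simp add: field_simps)
    qed
    also have "\<dots> \<le> opnorm p (Vk \<mu> n) / (exp \<mu> / (n * Gamma n))"
      using LB tpos by (intro divide_right_mono) auto
    finally show "L n \<le> opnorm p (Vk \<mu> n) / (Cp p * exp \<mu> / Gamma (n + 1))" unfolding tau .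
  qed
  show ?thesis using lim ev by blast
qed


lemma lower_one:
  fixes \<delta> :: real
  assumes p: "p = 1" and d: "0 < \<delta>" "\<delta> \<le> 1/4"
  shows "\<exists>L. (L \<longlongrightarrow> exp (-2*\<delta>*\<bar>\<mu>\<bar>) * (1-2*\<delta>) * (1/(1+\<delta>))) at_top \<and>
     (\<forall>\<^sub>F n in at_top. L n \<le> opnorm p (Vk \<mu> n) / (Cp p * exp \<mu> / Gamma (n + 1)))"
proof -
  define k where "k = 1/(1-2*\<delta>)"
  have k0: "k > 0" unfolding k_def using d by simp
  have dd: "1 - 2*\<delta> > 0" using d by simp
  define L where "L n = exp (-2*\<delta>*\<bar>\<mu>\<bar>) * ((1-2*\<delta>) * (n/(n-1))) * (1/(1+\<delta>)) *
     ((1 - exp (-((1+\<delta>) * (k*(n-1))))) * (1 - exp (-(\<delta> * (k*(n-1))))) / (1 - exp (-((1/\<delta>) * (k*(n-1))))))" for n :: real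
  have "(L \<longlongrightarrow> exp (-2*\<delta>*\<bar>\<mu>\<bar>) * ((1-2*\<delta>) * 1) * (1/(1+\<delta>)) * ((1 - 0) * (1 - 0) / (1 - 0))) at_top"
    unfolding L_def using d k0
    by (intro tendsto_intros n_over_n1 exp_neg_lim'[OF _ m_at_top]) auto
  then have lim: "(L \<longlongrightarrow> exp (-2*\<delta>*\<bar>\<mu>\<bar>) * (1-2*\<delta>) * (1/(1+\<delta>))) at_top" by simp
  have ev: "\<forall>\<^sub>F n in at_top. L n \<le> opnorm p (Vk \<mu> n) / (Cp p * exp \<mu> / Gamma (n + 1))"
    using eventually_ge_at_top[of "max 2 (2 - \<mu>)"]
  proof (rule eventually_mono)
    fix n :: real assume "max 2 (2 - \<mu>) \<le> n"
    then have n2: "n \<ge> 2" and lam: "n - 1 + \<mu> > 0" by auto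
    have G: "Gamma n > 0" using n2 by simp
    define m where "m = (n-1)/(1-2*\<delta>)"
    have mk: "m = k*(n-1)" unfolding m_def k_def by simp
    have m0: "m > 0" unfolding m_def using n2 dd by simp
    define a where "a = m/\<delta>"
    have a0: "a > 0" unfolding a_def using m0 d by simp
    have LB: "(1 / ((1 - exp (-a*1))/(a*1)) powr (1/1)) * (exp (\<mu> - 2*\<delta>*\<bar>\<mu>\<bar>) / Gamma n) *
      ((1 - exp (-(m+a)*\<delta>)) / (m+a)) * ((1 - exp (-(1*m)*\<delta>))/(1*m)) powr (1/1)
      \<le> opnorm p (Vk \<mu> n)"
      using LB_fin[OF _ _ d n2 lam a0, of p 1] p unfolding m_def by (simp add: one_ereal_def)
    define X1 where "X1 = exp (-((1/\<delta>) * (k*(n-1))))"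
    define X2 where "X2 = exp (-((1+\<delta>) * (k*(n-1))))"
    define X3 where "X3 = exp (-(\<delta> * (k*(n-1))))"
    have x1: "exp (-a*1) = X1" unfolding X1_def a_def mk by (simp add: field_simps)
    have x2: "exp (-(m+a)*\<delta>) = X2" unfolding X2_def a_def mk using d by (simp add: field_simps)
    have x3: "exp (-(1*m)*\<delta>) = X3" unfolding X3_def mk by (simp add: mult_ac)
    have X1l: "X1 < 1" unfolding X1_def using k0 d n2 by simp
    have X2l: "X2 \<le> 1" unfolding X2_def using k0 d n2 by simp
    have X3l: "X3 \<le> 1" unfolding X3_def using k0 d n2 by simp
    have nn1: "0 \<le> (1 - X1)/a" "0 \<le> (1 - X3)/m" using X1l X3l a0 m0 by auto
    have Cp1: "Cp p = 1" using p by (simp add: Cp_def)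
    have tau: "Cp p * exp \<mu> / Gamma (n + 1) = exp \<mu> / (n * Gamma n)"
      using Gamma_succ[of n] n2 Cp1 by simp
    have tpos: "exp \<mu> / (n * Gamma n) > 0" using G n2 by simp
    have LB': "(1 / ((1 - X1)/a)) * (exp (\<mu> - 2*\<delta>*\<bar>\<mu>\<bar>) / Gamma n) * ((1 - X2) / (m+a)) * ((1 - X3)/m)
      \<le> opnorm p (Vk \<mu> n)"
      using LB nn1 a0 m0 X1l X3l unfolding x1 x2 x3 by simp
    have "L n = ((1 / ((1 - X1)/a)) * (exp (\<mu> - 2*\<delta>*\<bar>\<mu>\<bar>) / Gamma n) * ((1 - X2) / (m+a)) * ((1 - X3)/m)) / (exp \<mu> / (n * Gamma n))"
    proof -
      have Gn: "Gamma n \<noteq> 0" using G by simp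
      have n1: "n - 1 \<noteq> 0" using n2 by simp
      have X1n: "1 - X1 \<noteq> 0" using X1l by simp
      have e: "exp (\<mu> - 2*\<delta>*\<bar>\<mu>\<bar>) = exp \<mu> * exp (-2*\<delta>*\<bar>\<mu>\<bar>)" by (simp add: exp_diff exp_minus field_simps)
      have ma: "m + a \<noteq> 0" using m0 a0 by simp
      have mn: "m \<noteq> 0" using m0 by simp
      have s1: "((1 / ((1 - X1)/a)) * (exp (\<mu> - 2*\<delta>*\<bar>\<mu>\<bar>) / Gamma n) * ((1 - X2) / (m+a)) * ((1 - X3)/m)) / (exp \<mu> / (n * Gamma n))
          = exp (-2*\<delta>*\<bar>\<mu>\<bar>) * (n/m) * (a/(m+a)) * ((1-X2)*(1-X3)/(1-X1))"
        unfolding e using Gn ma mn X1n a0 n2 by (intro alg1) auto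
      have "m + \<delta>*m > 0" using m0 d by (simp add: add_pos_pos)
      then have s2: "a/(m+a) = 1/(1+\<delta>)" unfolding a_def using m0 d by (simp add: field_simps)
      have s3: "n/m = (1-2*\<delta>)*(n/(n-1))" unfolding m_def using n1 dd by (simp add: field_simps)
      have "L n = exp (-2*\<delta>*\<bar>\<mu>\<bar>) * (n/m) * (a/(m+a)) * ((1-X2)*(1-X3)/(1-X1))"
        unfolding s2 s3 L_def X1_def X2_def X3_def by (simp add: mult_ac)
      then show ?thesis unfolding s1 .
    qed
    also have "\<dots> \<le> opnorm p (Vk \<mu> n) / (exp \<mu> / (n * Gamma n))"
      using LB' tpos by (intro divide_right_mono) auto
    finally show "L n \<le> opnorm p (Vk \<mu> n) / (Cp p * exp \<mu> / Gamma (n + 1))" unfolding tau .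
  qed
  show ?thesis using lim ev by blast
qed


lemma alg2:
  fixes c0 e E G W Z C m n S :: real
  assumes "G \<noteq> 0" "e \<noteq> 0" "C \<noteq> 0" "m \<noteq> 0" "n \<noteq> 0" and h: "c0 * W * Z = C / m * S"
  shows "(c0 * (e * E / G) * W * Z) / (C * e / (n * G)) = E * (n/m) * S"
proof -
  have "c0 * (e * E / G) * W * Z = (c0 * W * Z) * (e * E / G)" by (simp add: mult_ac)
  also have "\<dots> = C / m * S * (e * E / G)" unfolding h ..
  finally have "(c0 * (e * E / G) * W * Z) / (C * e / (n * G)) = (C / m * S * (e * E / G)) / (C * e / (n * G))" by simp
  also have "\<dots> = E * (n/m) * S" using assms(1-5) by (simp add: field_simps)
  finally show ?thesis .
qed

lemma lower_r:
  fixes \<delta> r :: real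
  assumes p: "p = ereal r" "r > 1" and d: "0 < \<delta>" "\<delta> \<le> 1/4"
  shows "\<exists>L. (L \<longlongrightarrow> exp (-2*\<delta>*\<bar>\<mu>\<bar>) * (1-2*\<delta>)) at_top \<and>
     (\<forall>\<^sub>F n in at_top. L n \<le> opnorm p (Vk \<mu> n) / (Cp p * exp \<mu> / Gamma (n + 1)))"
proof -
  define k where "k = 1/(1-2*\<delta>)"
  have k0: "k > 0" unfolding k_def using d by simp
  have dd: "1 - 2*\<delta> > 0" using d by simp
  define q where "q = r/(r-1)"
  have q0: "q > 0" unfolding q_def using p by simp
  have r0: "r > 0" using p by simp
  define L where "L n = exp (-2*\<delta>*\<bar>\<mu>\<bar>) * ((1/k) * (n/(n-1))) *
     ((1 - exp (-(q*\<delta>) * (k*(n-1)))) * (1 - exp (-(r*\<delta>) * (k*(n-1)))) powr (1/r) / (1 - exp (-q * (k*(n-1)))) powr (1/r))" for n :: real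
  have "(L \<longlongrightarrow> exp (-2*\<delta>*\<bar>\<mu>\<bar>) * ((1/k) * 1) * ((1 - 0) * (1 - 0) powr (1/r) / (1 - 0) powr (1/r))) at_top"
    unfolding L_def using d k0 q0 r0
    by (intro tendsto_intros n_over_n1 exp_neg_lim[OF _ m_at_top]) auto
  then have lim: "(L \<longlongrightarrow> exp (-2*\<delta>*\<bar>\<mu>\<bar>) * (1-2*\<delta>)) at_top" unfolding k_def by simp
  have ev: "\<forall>\<^sub>F n in at_top. L n \<le> opnorm p (Vk \<mu> n) / (Cp p * exp \<mu> / Gamma (n + 1))"
    using eventually_ge_at_top[of "max 2 (2 - \<mu>)"]
  proof (rule eventually_mono)
    fix n :: real assume "max 2 (2 - \<mu>) \<le> n"
    then have n2: "n \<ge> 2" and lam: "n - 1 + \<mu> > 0" by auto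
    have G: "Gamma n > 0" using n2 by simp
    define m where "m = (n-1)/(1-2*\<delta>)"
    have mk: "m = k*(n-1)" unfolding m_def k_def by simp
    have m0: "m > 0" unfolding m_def using n2 dd by simp
    define a where "a = m/(r-1)"
    have a0: "a > 0" unfolding a_def using m0 p by simp
    have LB: "(1 / ((1 - exp (-a*r))/(a*r)) powr (1/r)) * (exp (\<mu> - 2*\<delta>*\<bar>\<mu>\<bar>) / Gamma n) *
      ((1 - exp (-(m+a)*\<delta>)) / (m+a)) * ((1 - exp (-(r*m)*\<delta>))/(r*m)) powr (1/r)
      \<le> opnorm p (Vk \<mu> n)"
      using LB_fin[OF p(1) _ d n2 lam a0] p unfolding m_def by simp
    have A: "(1 / ((1 - exp (-a*r))/(a*r)) powr (1/r)) * ((1 - exp (-(m+a)*\<delta>)) / (m+a)) *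
      ((1 - exp (-(r*m)*\<delta>))/(r*m)) powr (1/r)
      = (1/(r powr (1/r) * q powr (1/q))) / m * ((1 - exp (-(q*\<delta>)*m)) *
      (1 - exp (-(r*\<delta>)*m)) powr (1/r) / (1 - exp (-q*m)) powr (1/r))"
      unfolding a_def q_def by (rule alg_r[OF p(2) m0 d(1)])
    have Cpq: "Cp p = 1/(r powr (1/r) * q powr (1/q))"
      using p unfolding Cp_def q_def by (auto simp: one_ereal_def Let_def)
    have Cp0: "Cp p \<noteq> 0" using Cp_pos[of p] p by simp
    have tau: "Cp p * exp \<mu> / Gamma (n + 1) = Cp p * exp \<mu> / (n * Gamma n)"
      using Gamma_succ[of n] n2 by simp
    have tpos: "Cp p * exp \<mu> / (n * Gamma n) > 0" using G n2 Cp_pos[of p] p by simp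
    have e: "exp (\<mu> - 2*\<delta>*\<bar>\<mu>\<bar>) = exp \<mu> * exp (-2*\<delta>*\<bar>\<mu>\<bar>)" by (simp add: exp_diff exp_minus field_simps)
    have "L n = exp (-2*\<delta>*\<bar>\<mu>\<bar>) * (n/m) * ((1 - exp (-(q*\<delta>)*m)) *
      (1 - exp (-(r*\<delta>)*m)) powr (1/r) / (1 - exp (-q*m)) powr (1/r))"
    proof -
      have s3: "n/m = (1/k)*(n/(n-1))" unfolding mk using n2 k0 by (simp add: field_simps)
      show ?thesis unfolding s3 L_def mk by (simp add: mult_ac)
    qed
    also have "\<dots> = ((1 / ((1 - exp (-a*r))/(a*r)) powr (1/r)) * (exp \<mu> * exp (-2*\<delta>*\<bar>\<mu>\<bar>) / Gamma n) *
      ((1 - exp (-(m+a)*\<delta>)) / (m+a)) * ((1 - exp (-(r*m)*\<delta>))/(r*m)) powr (1/r)) / (Cp p * exp \<mu> / (n * Gamma n))"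
    proof -
      have Gn: "Gamma n \<noteq> 0" using G by (simp only: less_imp_neq not_sym)
      have e0: "exp \<mu> \<noteq> 0" by simp
      have mn: "m \<noteq> 0" "n \<noteq> 0" using m0 n2 by auto
      show ?thesis by (rule alg2[OF Gn e0 Cp0 mn A[unfolded Cpq[symmetric]], symmetric])
    qed
    also have "\<dots> \<le> opnorm p (Vk \<mu> n) / (Cp p * exp \<mu> / (n * Gamma n))"
      using LB tpos unfolding e by (intro divide_right_mono) auto
    finally show "L n \<le> opnorm p (Vk \<mu> n) / (Cp p * exp \<mu> / Gamma (n + 1))" unfolding tau .
  qed
  show ?thesis using lim ev by blast
qed

lemma lower_part:
  assumes p: "1 \<le> p" and e: "\<epsilon> > 0"
  shows "\<forall>\<^sub>F n in at_top. 1 - \<epsilon> < opnorm p (Vk \<mu> n) / (Cp p * exp \<mu> / Gamma (n + 1))"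
proof -
  define lf where "lf \<delta> = exp (-2*\<delta>*\<bar>\<mu>\<bar>) * exp (-\<delta>) * (1-2*\<delta>) * (1/(1+\<delta>))" for \<delta> :: real
  have "(lf \<longlongrightarrow> lf 0) (at_right 0)"
    unfolding lf_def by (intro tendsto_intros tendsto_ident_at) auto
  then have l1: "(lf \<longlongrightarrow> 1) (at_right 0)"  by (simp add: lf_def)
  have "\<forall>\<^sub>F \<delta> in at_right 0. 1 - \<epsilon>/2 < lf \<delta>"
    using l1 e by (intro order_tendstoD(1)) auto
  then obtain b where b: "b > 0" "\<And>y. y > 0 \<Longrightarrow> y < b \<Longrightarrow> 1 - \<epsilon>/2 < lf y"
    unfolding eventually_at_right_field by auto
  define \<delta> where "\<delta> = min (b/2) (1/4)"
  have d: "0 < \<delta>" "\<delta> \<le> 1/4" unfolding \<delta>_def using b by auto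
  have ld: "1 - \<epsilon>/2 < lf \<delta>"  using b(2)[of \<delta>] d b(1) unfolding \<delta>_def by auto
  have e1: "exp (-2*\<delta>*\<bar>\<mu>\<bar>) \<ge> 0" "exp (-\<delta>) \<le> 1" "1 - 2*\<delta> \<ge> 0" "1/(1+\<delta>) \<le> 1" "1/(1+\<delta>) \<ge> 0"
    using d by auto
  have "\<exists>L v. (L \<longlongrightarrow> v) at_top \<and> lf \<delta> \<le> v \<and>
     (\<forall>\<^sub>F n in at_top. L n \<le> opnorm p (Vk \<mu> n) / (Cp p * exp \<mu> / Gamma (n + 1)))"
    using p
  proof (cases rule: p_cases)
    case 1
    obtain L where "(L \<longlongrightarrow> exp (-2*\<delta>*\<bar>\<mu>\<bar>) * exp (-\<delta>) * (1-2*\<delta>)) at_top"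
      "\<forall>\<^sub>F n in at_top. L n \<le> opnorm p (Vk \<mu> n) / (Cp p * exp \<mu> / Gamma (n + 1))"
      using lower_inf[OF 1 d, of \<mu>] by blast
    moreover have "lf \<delta> \<le> exp (-2*\<delta>*\<bar>\<mu>\<bar>) * exp (-\<delta>) * (1-2*\<delta>)"
      unfolding lf_def using e1 by (intro mult_left_le) (auto intro!: mult_nonneg_nonneg)
    ultimately show ?thesis by blast
  next
    case (2 r)
    show ?thesis
    proof (cases "r = 1")
      case True
      then have p1: "p = 1" using 2 by (simp add: one_ereal_def)
      obtain L where "(L \<longlongrightarrow> exp (-2*\<delta>*\<bar>\<mu>\<bar>) * (1-2*\<delta>) * (1/(1+\<delta>))) at_top"
        "\<forall>\<^sub>F n in at_top. L n \<le> opnorm p (Vk \<mu> n) / (Cp p * exp \<mu> / Gamma (n + 1))"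
        using lower_one[OF p1 d, of \<mu>] by blast
      moreover have "lf \<delta> \<le> exp (-2*\<delta>*\<bar>\<mu>\<bar>) * (1-2*\<delta>) * (1/(1+\<delta>))"
      proof -
        have "lf \<delta> = exp (-\<delta>) * (exp (-2*\<delta>*\<bar>\<mu>\<bar>) * (1-2*\<delta>) * (1/(1+\<delta>)))" unfolding lf_def by (simp add: mult_ac)
        also have "\<dots> \<le> 1 * (exp (-2*\<delta>*\<bar>\<mu>\<bar>) * (1-2*\<delta>) * (1/(1+\<delta>)))"
          using e1 by (intro mult_right_mono) (auto intro!: mult_nonneg_nonneg)
        finally show ?thesis by simp
      qed
      ultimately show ?thesis by blast
    next
      case False
      then have r1: "r > 1" using 2 by simp
      obtain L where "(L \<longlongrightarrow> exp (-2*\<delta>*\<bar>\<mu>\<bar>) * (1-2*\<delta>)) at_top"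
        "\<forall>\<^sub>F n in at_top. L n \<le> opnorm p (Vk \<mu> n) / (Cp p * exp \<mu> / Gamma (n + 1))"
        using lower_r[OF 2(1) r1 d, of \<mu>] by blast
      moreover have "lf \<delta> \<le> exp (-2*\<delta>*\<bar>\<mu>\<bar>) * (1-2*\<delta>)"
      proof -
        have "lf \<delta> = (exp (-\<delta>) * (1/(1+\<delta>))) * (exp (-2*\<delta>*\<bar>\<mu>\<bar>) * (1-2*\<delta>))" unfolding lf_def by (simp add: mult_ac)
        also have "\<dots> \<le> 1 * (exp (-2*\<delta>*\<bar>\<mu>\<bar>) * (1-2*\<delta>))"
          using e1 by (intro mult_right_mono mult_le_one) (auto intro!: mult_nonneg_nonneg)
        finally show ?thesis by simp
      qed
      ultimately show ?thesis by blast
    qed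
  qed
  then obtain L v where L: "(L \<longlongrightarrow> v) at_top" "lf \<delta> \<le> v"
    "\<forall>\<^sub>F n in at_top. L n \<le> opnorm p (Vk \<mu> n) / (Cp p * exp \<mu> / Gamma (n + 1))" by blast
  have "\<forall>\<^sub>F n in at_top. v - \<epsilon>/2 < L n" using L(1) e by (intro order_tendstoD(1)) auto
  then show ?thesis using L(3)
  proof eventually_elim
    case (elim n)
    then show ?case using L(2) ld by linarith
  qed
qed


lemma alg3:
  fixes G C em eh N n ea AB :: real
  assumes "G \<noteq> 0" "C \<noteq> 0" "em \<noteq> 0" "eh \<noteq> 0" "N \<noteq> 0" "n \<noteq> 0"
  shows "(32 * ea * (1/eh) / (N * G) * AB) / ((C * em / (n * G)) / 2) =
    2 * (AB * (N/2) * (1/eh)) * (32 * ea / (C * em)) * (n / (N * (N/2)))"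
  using assms by (simp add: field_simps)

theorem lemma3p3:
  fixes \<mu> :: real and p :: ereal
  assumes "1 \<le> p"
  shows "((\<lambda>n::real. opnorm p (\<lambda>u t. Vk \<mu> n u t - (exp (-(n - 1)) / Gamma n) * Sop (n - 1 + \<mu>) u t)
              / opnorm p (Vk \<mu> n)) \<longlongrightarrow> 0) at_top
       \<and> ((\<lambda>n::real. opnorm p (Vk \<mu> n) / (Cp p * exp \<mu> / Gamma (n + 1))) \<longlongrightarrow> 1) at_top"
proof -
  note p = assms
  have Cp0: "Cp p > 0" by (rule Cp_pos[OF p])
  define R where "R n = opnorm p (Vk \<mu> n)" for n
  define tau where "tau n = Cp p * exp \<mu> / Gamma (n + 1)" for n :: real
  have ratio: "((\<lambda>n. R n / tau n) \<longlongrightarrow> 1) at_top"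
  proof (rule order_tendstoI)
    fix a :: real assume a: "a < 1"
    show "\<forall>\<^sub>F n in at_top. a < R n / tau n"
      using lower_part[OF p, of "1 - a" \<mu>] a unfolding R_def tau_def by simp
  next
    fix a :: real assume a: "a > 1"
    note U = upper_part[OF p, of \<mu>]
    have "\<forall>\<^sub>F n in at_top. (Aexp p (n-1+\<mu>) * Bexp p (n-1+\<mu>) * (n-1+\<mu>) * exp (-(n-1+\<mu>))) * (n/(n-1+\<mu>)) / Cp p < a"
      using U(2) a by (rule order_tendstoD(2))
    then show "\<forall>\<^sub>F n in at_top. R n / tau n < a"
      using U(1) unfolding R_def tau_def by eventually_elim auto
  qed
  define DD where "DD n = opnorm p (\<lambda>u t. Vk \<mu> n u t - (exp (-(n - 1)) / Gamma n) * Sop (n - 1 + \<mu>) u t)" for n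
  define V where "V n = 2 * (Aexp p ((n-1)/2) * Bexp p ((n-1)/2) * ((n-1)/2) * exp (-((n-1)/2))) *
      (32 * exp \<bar>\<mu>\<bar> / (Cp p * exp \<mu>)) * (n/((n-1)*((n-1)/2)))" for n :: real
  have Vlim: "(V \<longlongrightarrow> 2 * Cp p * (32 * exp \<bar>\<mu>\<bar> / (Cp p * exp \<mu>)) * 0) at_top"
    unfolding V_def
    by (intro tendsto_intros n_over_sq filterlim_compose[OF AB_lim[OF p] half_at_top]) (use Cp0 in auto)
  then have Vlim0: "(V \<longlongrightarrow> 0) at_top" by simp
  have half: "\<forall>\<^sub>F n in at_top. 1/2 < R n / tau n"
    using ratio by (rule order_tendstoD(1)) simp
  have bounds: "\<forall>\<^sub>F n in at_top. 0 \<le> DD n / R n \<and> DD n / R n \<le> V n"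
    using half eventually_ge_at_top[of "max 3 (2 - \<mu>)"]
  proof eventually_elim
    case (elim n)
    then have hf: "1/2 < R n / tau n" and n3: "n \<ge> 3" and lam: "n - 1 + \<mu> > 0" by auto
    have G: "Gamma n > 0" using n3 by simp
    have Gn: "Gamma n \<noteq> 0" using G by (simp only: less_imp_neq not_sym)
    have tau: "tau n = Cp p * exp \<mu> / (n * Gamma n)" unfolding tau_def using Gamma_succ[of n] n3 by simp
    have tpos: "tau n > 0" unfolding tau using Cp0 G n3 by simp
    have Rge: "R n > tau n / 2" using hf tpos by (simp add: field_simps)
    have Rpos: "R n > 0" using Rge tpos by simp
    define E where "E = 32 * exp \<bar>\<mu>\<bar> * exp (-((n-1)/2)) / ((n-1) * Gamma n)"
    define AB where "AB = Aexp p ((n-1)/2) * Bexp p ((n-1)/2)"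
    note DU = D_ub[OF p n3 lam]
    have D0: "0 \<le> DD n" unfolding DD_def by (rule opnorm_nonneg[OF DU])
    have Dle: "DD n \<le> E * AB" unfolding DD_def E_def AB_def by (rule opnorm_le[OF DU])
    have "DD n / R n \<le> (E * AB) / (tau n / 2)"
    proof (rule frac_le)
      show "0 \<le> E * AB" using D0 Dle by linarith
    qed (use Dle tpos Rge in auto)
    also have "\<dots> = V n"
    proof -
      have n1: "n - 1 \<noteq> 0" using n3 by simp
      have ee: "exp (-((n-1)/2)) = 1 / exp ((n-1)/2)" by (simp add: exp_minus field_simps)
      show ?thesis unfolding tau V_def E_def AB_def ee
        by (rule alg3) (use Gn n1 n3 Cp0 in auto)
    qed
    finally show ?case using D0 Rpos by simp
  qed
  have first: "((\<lambda>n. DD n / R n) \<longlongrightarrow> 0) at_top"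
  proof (rule tendsto_sandwich[OF _ _ tendsto_const Vlim0])
    show "\<forall>\<^sub>F n in at_top. 0 \<le> DD n / R n" using bounds by eventually_elim auto
    show "\<forall>\<^sub>F n in at_top. DD n / R n \<le> V n" using bounds by eventually_elim auto
  qed
  show ?thesis using first ratio unfolding DD_def R_def tau_def by simp
qed

end
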